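(* Let $0\le s<n$, $A\in M_{s+1,n-s}$, and $A'=BA$ for some $B\in\mathrm{GL}_{s+1}(\mathbb Q)$. Then $\omega_j(A')=\omega_j(A)$ for all $j=1,\dots,n-s$.
   Context: Higher order exponents: let $V=\mathbb R^{n+1}$ with basis $e_0,\dots,e_n$, $V_0=\mathrm{span}(e_1,\dots,e_n)$, $V_\bullet=\mathrm{span}(e_{s+1},\dots,e_n)$; $e_I=e_{i_1}\wedge\dots\wedge e_{i_j}$; $\bigwedge(V)$ carries the inner product making $\{e_I\}$ orthonormal. $\mathcal S_{n+1,j}$ is the set of $w=v_1\wedge\dots\wedge v_j$ with $v_1,\dots,v_j\in\mathbb Z^{n+1}$ linearly independent; $\pi_\bullet$ is the orthogonal projection $\bigwedge^jV\to\bigwedge^jV_\bullet$. For a matrix $A\in M_{s+1,n-s}$ with rows indexed $0,\dots,s$ and columns $s+1,\dots,n$, let $a_i=\sum_{k=s+1}^na_{i,k}e_k$ and let $R_Ac(w)\in(\bigwedge^{j-1}V_0)^{s+1}$ have $i$-th component $\sum_{J\subset\{1,\dots,n\},\#J=j-1}\langle(e_i+a_i)\wedge e_J,w\rangle e_J$ (Euclidean norm). For $1\le j\le n-s$, $\omega_j(A)$ is the supremum of $v$ such that there exist $w\in\mathcal S_{n+1,j}$ with arbitrarily large $\|\pi_\bullet(w)\|$ satisfying $\|R_Ac(w)\|<\|\pi_\bullet(w)\|^{-\frac{v+1-j}{j}}$. *)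

theory Defs
  imports "Jordan_Normal_Form.Determinant" "Jordan_Normal_Form.DL_Submatrix"
    "HOL-Library.Extended_Real"
begin

text \<open>Elements of the exterior power of V = R^(n+1) are represented by their coordinates
  with respect to the orthonormal basis e_I (I a subset of {0..n}, e_I the wedge of the
  e_i, i in I, in increasing order): a function from index sets to reals.\<close>

definition multi_idx :: "nat set \<Rightarrow> nat \<Rightarrow> nat set set" where
  "multi_idx X j = {I. I \<subseteq> X \<and> card I = j}"

text \<open>Coordinates of the wedge product of the columns of an (n+1) x j matrix M:
  the coefficient on e_I is the I-minor of M.\<close>
definition wedge_cols :: "nat \<Rightarrow> real mat \<Rightarrow> nat set \<Rightarrow> real" where
  "wedge_cols n M I =
     (if I \<in> multi_idx {0..n} (dim_col M) then det (submatrix M I UNIV) else 0)"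

definition ext_inner :: "nat \<Rightarrow> nat \<Rightarrow> (nat set \<Rightarrow> real) \<Rightarrow> (nat set \<Rightarrow> real) \<Rightarrow> real" where
  "ext_inner n j x y = (\<Sum>I\<in>multi_idx {0..n} j. x I * y I)"

definition ext_norm :: "nat \<Rightarrow> nat \<Rightarrow> (nat set \<Rightarrow> real) \<Rightarrow> real" where
  "ext_norm n j x = sqrt (ext_inner n j x x)"

definition cols_lin_indep :: "real mat \<Rightarrow> bool" where
  "cols_lin_indep M \<longleftrightarrow>
     (\<forall>c \<in> carrier_vec (dim_col M). M *\<^sub>v c = 0\<^sub>v (dim_row M) \<longrightarrow> c = 0\<^sub>v (dim_col M))"

definition S_set :: "nat \<Rightarrow> nat \<Rightarrow> (nat set \<Rightarrow> real) set" where
  "S_set n j = {wedge_cols n (map_mat real_of_int V) | V.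
      V \<in> carrier_mat (n+1) j \<and> cols_lin_indep (map_mat real_of_int V)}"

text \<open>Orthogonal projection onto the j-th exterior power of V_bullet = span(e_{s+1},...,e_n).\<close>
definition proj_bullet :: "nat \<Rightarrow> nat \<Rightarrow> (nat set \<Rightarrow> real) \<Rightarrow> (nat set \<Rightarrow> real)" where
  "proj_bullet n s w = (\<lambda>I. if I \<subseteq> {s+1..n} then w I else 0)"

text \<open>The vector e_i + a_i, where a_i = sum_{k=s+1}^n a_{i,k} e_k; the matrix A has rows
  indexed 0..s and its column number k-(s+1) corresponds to the paper's column index k.\<close>
definition ea_vec :: "nat \<Rightarrow> nat \<Rightarrow> real mat \<Rightarrow> nat \<Rightarrow> real vec" where
  "ea_vec n s A i = vec (n+1) (\<lambda>m. (if m = i then 1 else 0) +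
       (if s < m \<and> m \<le> n then A $$ (i, m - (s+1)) else 0))"

text \<open>The (n+1) x j matrix with columns e_i + a_i, e_{J_1}, ..., e_{J_{j-1}} (J increasing),
  whose wedge is (e_i + a_i) /\ e_J.\<close>
definition RA_mat :: "nat \<Rightarrow> nat \<Rightarrow> nat \<Rightarrow> real mat \<Rightarrow> nat \<Rightarrow> nat set \<Rightarrow> real mat" where
  "RA_mat n s j A i J = mat (n+1) j (\<lambda>(m,q).
      if q = 0 then ea_vec n s A i $ m
      else (if m = sorted_list_of_set J ! (q - 1) then 1 else 0))"

text \<open>Euclidean norm of R_A c(w), an (s+1)-tuple of (j-1)-vectors in the exterior power of V_0.\<close>
definition RA_norm :: "nat \<Rightarrow> nat \<Rightarrow> nat \<Rightarrow> real mat \<Rightarrow> (nat set \<Rightarrow> real) \<Rightarrow> real" where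
  "RA_norm n s j A w = sqrt (\<Sum>i\<in>{0..s}. \<Sum>J\<in>multi_idx {1..n} (j-1).
       (ext_inner n j (wedge_cols n (RA_mat n s j A i J)) w)^2)"

definition omega :: "nat \<Rightarrow> nat \<Rightarrow> nat \<Rightarrow> real mat \<Rightarrow> ereal" where
  "omega n s j A = Sup {ereal v | v. \<forall>M::real. \<exists>w\<in>S_set n j.
       ext_norm n j (proj_bullet n s w) > M \<and>
       RA_norm n s j A w < ext_norm n j (proj_bullet n s w) powr (- (v + 1 - real j) / real j)}"

end

theory Submission
  imports Defs
begin

definition Dm :: "nat \<Rightarrow> (nat \<Rightarrow> nat \<Rightarrow> real) \<Rightarrow> real" where
  "Dm j g = det (mat j j (\<lambda>(q,c). g q c))"

lemma Dm_cong: assumes "\<And>q c. q < j \<Longrightarrow> c < j \<Longrightarrow> g q c = g' q c"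
  shows "Dm j g = Dm j g'"
proof -
  have "mat j j (\<lambda>(q,c). g q c) = mat j j (\<lambda>(q,c). g' q c)"
    by (rule eq_matI, auto simp: assms)
  thus ?thesis unfolding Dm_def by simp
qed

lemma Dm_leibniz: "Dm j g = (\<Sum>p | p permutes {0..<j}. of_int (sign p) * (\<Prod>q = 0..<j. g q (p q)))"
proof -
  have "Dm j g = (\<Sum>p | p permutes {0..<j}. of_int (sign p) * (\<Prod>q = 0..<j. mat j j (\<lambda>(q,c). g q c) $$ (q, p q)))"
    unfolding Dm_def by (rule det_def', simp)
  also have "\<dots> = (\<Sum>p | p permutes {0..<j}. of_int (sign p) * (\<Prod>q = 0..<j. g q (p q)))"
  proof (rule sum.cong[OF refl])
    fix p assume "p \<in> {p. p permutes {0..<j}}"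
    hence p: "p permutes {0..<j}" by simp
    have "(\<Prod>q = 0..<j. mat j j (\<lambda>(q,c). g q c) $$ (q, p q)) = (\<Prod>q = 0..<j. g q (p q))"
      by (rule prod.cong[OF refl], insert permutes_in_image[OF p], auto)
    thus "of_int (sign p) * (\<Prod>q = 0..<j. mat j j (\<lambda>(q,c). g q c) $$ (q, p q)) =
          of_int (sign p) * (\<Prod>q = 0..<j. g q (p q))" by simp
  qed
  finally show ?thesis .
qed

lemma Dm_multilin:
  assumes S: "finite S"
    and g: "\<And>q c. q < j \<Longrightarrow> c < j \<Longrightarrow> g q c = (\<Sum>m\<in>S. a q m * h m c)"
  shows "Dm j g = (\<Sum>f\<in>Pi\<^sub>E {0..<j} (\<lambda>_. S). (\<Prod>q = 0..<j. a q (f q)) * Dm j (\<lambda>q c. h (f q) c))"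
proof -
  let ?P = "{p. p permutes {0..<j}}"
  have "Dm j g = (\<Sum>p\<in>?P. of_int (sign p) * (\<Prod>q = 0..<j. \<Sum>m\<in>S. a q m * h m (p q)))"
    unfolding Dm_leibniz
  proof (rule sum.cong[OF refl])
    fix p assume "p \<in> ?P"
    hence p: "p permutes {0..<j}" by simp
    show "of_int (sign p) * (\<Prod>q = 0..<j. g q (p q)) = of_int (sign p) * (\<Prod>q = 0..<j. \<Sum>m\<in>S. a q m * h m (p q))"
      by (rule arg_cong[where f="\<lambda>x. _ * x"], rule prod.cong[OF refl], insert permutes_in_image[OF p], auto simp: g)
  qed
  also have "\<dots> = (\<Sum>p\<in>?P. of_int (sign p) * (\<Sum>f\<in>Pi\<^sub>E {0..<j} (\<lambda>_. S). \<Prod>q = 0..<j. a q (f q) * h (f q) (p q)))"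
    by (subst prod_sum_PiE, insert S, auto)
  also have "\<dots> = (\<Sum>p\<in>?P. \<Sum>f\<in>Pi\<^sub>E {0..<j} (\<lambda>_. S). (\<Prod>q = 0..<j. a q (f q)) * (of_int (sign p) * (\<Prod>q = 0..<j. h (f q) (p q))))"
    by (simp add: sum_distrib_left prod.distrib algebra_simps)
  also have "\<dots> = (\<Sum>f\<in>Pi\<^sub>E {0..<j} (\<lambda>_. S). \<Sum>p\<in>?P. (\<Prod>q = 0..<j. a q (f q)) * (of_int (sign p) * (\<Prod>q = 0..<j. h (f q) (p q))))"
    by (rule sum.swap)
  also have "\<dots> = (\<Sum>f\<in>Pi\<^sub>E {0..<j} (\<lambda>_. S). (\<Prod>q = 0..<j. a q (f q)) * Dm j (\<lambda>q c. h (f q) c))"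
    unfolding Dm_leibniz by (simp add: sum_distrib_left)
  finally show ?thesis .
qed

lemma Dm_lin_row:
  assumes S: "finite S" and r: "r < j"
    and g: "\<And>c. c < j \<Longrightarrow> g r c = (\<Sum>m\<in>S. a m * h m c)"
  shows "Dm j g = (\<Sum>m\<in>S. a m * Dm j (g(r := h m)))"
proof -
  let ?P = "{p. p permutes {0..<j}}"
  have "Dm j g = (\<Sum>p\<in>?P. \<Sum>m\<in>S. a m * (of_int (sign p) * (\<Prod>q = 0..<j. (g(r := h m)) q (p q))))"
    unfolding Dm_leibniz
  proof (rule sum.cong[OF refl])
    fix p assume "p \<in> ?P"
    hence p: "p permutes {0..<j}" by simp
    have pr: "p r < j" using permutes_in_image[OF p] r by auto
    have "(\<Prod>q = 0..<j. g q (p q)) = g r (p r) * (\<Prod>q \<in> {0..<j} - {r}. g q (p q))"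
      by (rule prod.remove, insert r, auto)
    also have "\<dots> = (\<Sum>m\<in>S. a m * h m (p r)) * (\<Prod>q \<in> {0..<j} - {r}. g q (p q))"
      using g[OF pr] by simp
    finally have 1: "(\<Prod>q = 0..<j. g q (p q)) = (\<Sum>m\<in>S. a m * h m (p r)) * (\<Prod>q \<in> {0..<j} - {r}. g q (p q))" .
    have 2: "\<And>m. (\<Prod>q = 0..<j. (g(r := h m)) q (p q)) = h m (p r) * (\<Prod>q \<in> {0..<j} - {r}. g q (p q))"
    proof -
      fix m
      have "(\<Prod>q = 0..<j. (g(r := h m)) q (p q)) = (g(r := h m)) r (p r) * (\<Prod>q \<in> {0..<j} - {r}. (g(r := h m)) q (p q))"
        by (rule prod.remove, insert r, auto)
      also have "(\<Prod>q \<in> {0..<j} - {r}. (g(r := h m)) q (p q)) = (\<Prod>q \<in> {0..<j} - {r}. g q (p q))"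
        by (rule prod.cong, auto)
      finally show "(\<Prod>q = 0..<j. (g(r := h m)) q (p q)) = h m (p r) * (\<Prod>q \<in> {0..<j} - {r}. g q (p q))" by simp
    qed
    show "of_int (sign p) * (\<Prod>q = 0..<j. g q (p q)) = (\<Sum>m\<in>S. a m * (of_int (sign p) * (\<Prod>q = 0..<j. (g(r := h m)) q (p q))))"
      unfolding 1 2 by (simp add: sum_distrib_left sum_distrib_right algebra_simps)
  qed
  also have "\<dots> = (\<Sum>m\<in>S. \<Sum>p\<in>?P. a m * (of_int (sign p) * (\<Prod>q = 0..<j. (g(r := h m)) q (p q))))"
    by (rule sum.swap)
  also have "\<dots> = (\<Sum>m\<in>S. a m * Dm j (g(r := h m)))"
    unfolding Dm_leibniz by (simp add: sum_distrib_left)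
  finally show ?thesis .
qed

lemma Dm_identical:
  assumes "q1 \<noteq> q2" "q1 < j" "q2 < j" "\<And>c. c < j \<Longrightarrow> g q1 c = g q2 c"
  shows "Dm j g = 0"
  unfolding Dm_def
  by (rule det_identical_rows[OF _ assms(1-3)], auto intro!: eq_vecI simp: assms(2,3,4))

lemma Dm_permute:
  assumes p: "p permutes {0..<j}"
  shows "Dm j (\<lambda>q c. g (p q) c) = of_int (sign p) * Dm j g"
proof -
  have "Dm j (\<lambda>q c. g (p q) c) = det (mat j j (\<lambda>(q,c). mat j j (\<lambda>(q,c). g q c) $$ (p q, c)))"
    unfolding Dm_def
    by (rule arg_cong[where f=det], rule eq_matI, insert permutes_in_image[OF p], auto)
  also have "\<dots> = of_int (sign p) * Dm j g" unfolding Dm_def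
    by (rule det_permute_rows[OF _ p], simp)
  finally show ?thesis .
qed

lemma Dm_swap:
  assumes "q1 \<noteq> q2" "q1 < j" "q2 < j"
  shows "Dm j (\<lambda>q c. g (Transposition.transpose q1 q2 q) c) = - Dm j g"
proof -
  have p: "Transposition.transpose q1 q2 permutes {0..<j}"
    by (rule permutes_swap_id, insert assms, auto)
  show ?thesis using Dm_permute[OF p, of g] assms by (simp add: sign_swap_id)
qed

lemma pick_image: assumes "finite I" shows "pick I ` {0..<card I} = I"
proof
  show "pick I ` {0..<card I} \<subseteq> I" using pick_in_set_le by auto
  show "I \<subseteq> pick I ` {0..<card I}"
  proof
    fix x assume x: "x \<in> I"
    have "{a\<in>I. a < x} \<subset> I" using x by auto
    hence "card {a\<in>I. a < x} < card I" using assms by (simp add: psubset_card_mono)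
    thus "x \<in> pick I ` {0..<card I}" by (intro image_eqI[where x="card {a\<in>I. a < x}"], insert pick_card_in_set[OF x], auto)
  qed
qed

lemma pick_inj: assumes "finite I" shows "inj_on (pick I) {0..<card I}"
  by (rule eq_card_imp_inj_on, simp, subst pick_image[OF assms], simp)

lemma submatrix_rows_eq:
  assumes M: "M \<in> carrier_mat N j" and I: "I \<subseteq> {0..<N}" "card I = j"
  shows "submatrix M I UNIV = mat j j (\<lambda>(q,c). M $$ (pick I q, c))"
proof -
  have c1: "{i. i < dim_row M \<and> i \<in> I} = I" using M I by auto
  have c2: "{i. i < dim_col M \<and> i \<in> UNIV} = {0..<j}" using M by auto
  show ?thesis
  proof (rule eq_matI)
    fix i c assume "i < dim_row (mat j j (\<lambda>(q,c). M $$ (pick I q, c)))" "c < dim_col (mat j j (\<lambda>(q,c). M $$ (pick I q, c)))"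
    hence ic: "i < j" "c < j" by auto
    show "submatrix M I UNIV $$ (i,c) = mat j j (\<lambda>(q,c). M $$ (pick I q, c)) $$ (i,c)"
      using submatrix_index[of i M I c UNIV] c1 c2 I ic pick_UNIV by auto
  qed (insert M, auto simp: dim_submatrix c1 c2 I)
qed

definition multi_idx_lt where "multi_idx_lt N j = multi_idx {0..<N} j"

lemma cauchy_binet:
  fixes M V :: "real mat"
  assumes M: "M \<in> carrier_mat N j" and V: "V \<in> carrier_mat N j"
  shows "det (transpose_mat M * V) =
    (\<Sum>I\<in>multi_idx {0..<N} j. det (submatrix M I UNIV) * det (submatrix V I UNIV))"
proof -
  let ?F = "Pi\<^sub>E {0..<j} (\<lambda>_. {0..<N})"
  let ?Fi = "{f \<in> ?F. inj_on f {0..<j}}"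
  let ?h = "\<lambda>f. (\<Prod>q = 0..<j. M $$ (f q, q)) * Dm j (\<lambda>q c. V $$ (f q, c))"
  let ?T = "multi_idx {0..<N} j"
  have fF: "finite ?F" by (rule finite_PiE, auto)
  have "det (transpose_mat M * V) = Dm j (\<lambda>q c. \<Sum>m\<in>{0..<N}. M $$ (m, q) * V $$ (m, c))"
    unfolding Dm_def
    by (rule arg_cong[where f=det], rule eq_matI, insert M V, auto simp: scalar_prod_def)
  also have "\<dots> = sum ?h ?F"
    by (rule Dm_multilin, auto)
  also have "\<dots> = sum ?h ?Fi + sum ?h (?F - ?Fi)"
    by (subst sum.subset_diff[of ?Fi ?F], insert fF, auto simp: add.commute)
  also have "sum ?h (?F - ?Fi) = 0"
  proof (rule sum.neutral, rule ballI)
    fix f assume "f \<in> ?F - ?Fi"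
    then obtain q1 q2 where q: "q1 \<noteq> q2" "q1 < j" "q2 < j" "f q1 = f q2"
      unfolding inj_on_def by auto
    show "?h f = 0" using Dm_identical[OF q(1-3), of "\<lambda>q c. V $$ (f q, c)"] q(4) by simp
  qed
  also have "sum ?h ?Fi = (\<Sum>I\<in>?T. sum ?h {f\<in>?Fi. f ` {0..<j} = I})"
  proof (rule sum.group[symmetric])
    show "finite ?Fi" using fF by auto
    show "finite ?T" unfolding multi_idx_def
      by (rule finite_subset[of _ "Pow {0..<N}"], auto)
    show "(\<lambda>f. f ` {0..<j}) ` ?Fi \<subseteq> ?T"
    proof
      fix I assume "I \<in> (\<lambda>f. f ` {0..<j}) ` ?Fi"
      then obtain f where f: "f \<in> ?F" "inj_on f {0..<j}" and I: "I = f ` {0..<j}" by auto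
      have "I \<subseteq> {0..<N}" using f(1) I by (auto dest: PiE_mem)
      moreover have "card I = j" using card_image[OF f(2)] I by simp
      ultimately show "I \<in> ?T" unfolding multi_idx_def by auto
    qed
  qed
  also have "\<dots> = (\<Sum>I\<in>?T. det (submatrix M I UNIV) * det (submatrix V I UNIV))"
  proof (rule sum.cong[OF refl])
    fix I assume "I \<in> ?T"
    hence I: "I \<subseteq> {0..<N}" "card I = j" unfolding multi_idx_def by auto
    have fI: "finite I" using I(1) finite_subset by auto
    let ?P = "{p. p permutes {0..<j}}"
    let ?phi = "\<lambda>p q. if q < j then pick I (p q) else undefined"
    have pin: "\<And>q. q < j \<Longrightarrow> pick I q \<in> I" using pick_in_set_le I by auto
    have pinj: "inj_on (pick I) {0..<j}" using pick_inj[OF fI] I by simp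
    have pim: "pick I ` {0..<j} = I" using pick_image[OF fI] I by simp
    have set_eq: "{f\<in>?Fi. f ` {0..<j} = I} = ?phi ` ?P"
    proof
      show "?phi ` ?P \<subseteq> {f\<in>?Fi. f ` {0..<j} = I}"
      proof
        fix f assume "f \<in> ?phi ` ?P"
        then obtain p where p: "p permutes {0..<j}" and f: "f = ?phi p" by auto
        have pj: "\<And>q. q < j \<Longrightarrow> p q < j" using permutes_in_image[OF p] by auto
        have "\<And>q. q < j \<Longrightarrow> pick I (p q) < N" using pin pj I(1) by force
        hence "f \<in> ?F" using f unfolding PiE_def Pi_def extensional_def by auto
        moreover have "inj_on f {0..<j}"
        proof
          fix x y assume "x \<in> {0..<j}" "y \<in> {0..<j}" "f x = f y"
          hence "pick I (p x) = pick I (p y)" "p x < j" "p y < j" using f pj by auto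
          hence "p x = p y" using pinj by (auto simp: inj_on_def)
          thus "x = y" using permutes_inj[OF p] by (auto simp: inj_def)
        qed
        moreover have "f ` {0..<j} = I"
        proof -
          have "f ` {0..<j} = pick I ` (p ` {0..<j})" using f by (auto simp: image_def)
          also have "p ` {0..<j} = {0..<j}" by (rule permutes_image[OF p])
          finally show ?thesis using pim by simp
        qed
        ultimately show "f \<in> {f\<in>?Fi. f ` {0..<j} = I}" by auto
      qed
      show "{f\<in>?Fi. f ` {0..<j} = I} \<subseteq> ?phi ` ?P"
      proof
        fix f assume "f \<in> {f\<in>?Fi. f ` {0..<j} = I}"
        hence fF: "f \<in> ?F" and fi: "inj_on f {0..<j}" and fim: "f ` {0..<j} = I" by auto
        define p where "p = (\<lambda>q. if q < j then card {a\<in>I. a < f q} else q)"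
        have fqI: "\<And>q. q < j \<Longrightarrow> f q \<in> I" using fim by auto
        have pf: "\<And>q. q < j \<Longrightarrow> pick I (p q) = f q" unfolding p_def using pick_card_in_set fqI by auto
        have pj: "\<And>q. q < j \<Longrightarrow> p q < j"
        proof -
          fix q assume q: "q < j"
          have "{a\<in>I. a < f q} \<subset> I" using fqI[OF q] by auto
          hence "card {a\<in>I. a < f q} < card I" using fI by (simp add: psubset_card_mono)
          thus "p q < j" unfolding p_def using q I by simp
        qed
        have pp: "p permutes {0..<j}"
        proof (rule inj_on_nat_permutes)
          show "inj_on p {0..<j}"
          proof
            fix x y assume "x \<in> {0..<j}" "y \<in> {0..<j}" "p x = p y"
            hence "f x = f y" "x \<in> {0..<j}" "y \<in> {0..<j}" using pf by (metis atLeastLessThan_iff)+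
            thus "x = y" using fi by (auto simp: inj_on_def)
          qed
          show "p \<in> {0..<j} \<rightarrow> {0..<j}" using pj by auto
          show "\<And>i. i \<notin> {0..<j} \<Longrightarrow> p i = i" unfolding p_def by auto
        qed simp
        have "f = ?phi p"
        proof
          fix q show "f q = ?phi p q"
            using pf fF by (cases "q < j", auto simp: PiE_def extensional_def)
        qed
        thus "f \<in> ?phi ` ?P" using pp by auto
      qed
    qed
    have inj_phi: "inj_on ?phi ?P"
    proof
      fix p1 p2 assume p1: "p1 \<in> ?P" and p2: "p2 \<in> ?P" and eq: "?phi p1 = ?phi p2"
      show "p1 = p2"
      proof
        fix q show "p1 q = p2 q"
        proof (cases "q < j")
          case True
          hence "pick I (p1 q) = pick I (p2 q)" using fun_cong[OF eq, of q] by simp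
          moreover have "p1 q < j" "p2 q < j" using p1 p2 True permutes_in_image by fastforce+
          ultimately show ?thesis using pinj by (auto simp: inj_on_def)
        next
          case False
          thus ?thesis using p1 p2 by (auto simp: permutes_def)
        qed
      qed
    qed
    have "sum ?h {f\<in>?Fi. f ` {0..<j} = I} = sum (?h \<circ> ?phi) ?P"
      unfolding set_eq by (rule sum.reindex[OF inj_phi])
    also have "\<dots> = (\<Sum>p\<in>?P. (of_int (sign p) * (\<Prod>q = 0..<j. M $$ (pick I (p q), q))) * Dm j (\<lambda>q c. V $$ (pick I q, c)))"
    proof (rule sum.cong[OF refl])
      fix p assume "p \<in> ?P"
      hence p: "p permutes {0..<j}" by simp
      have pj: "\<And>q. q < j \<Longrightarrow> p q < j" using permutes_in_image[OF p] by auto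
      have 1: "(\<Prod>q = 0..<j. M $$ (?phi p q, q)) = (\<Prod>q = 0..<j. M $$ (pick I (p q), q))"
        by (rule prod.cong, auto)
      have "Dm j (\<lambda>q c. V $$ (?phi p q, c)) = Dm j (\<lambda>q c. V $$ (pick I (p q), c))"
        by (rule Dm_cong, auto)
      also have "\<dots> = of_int (sign p) * Dm j (\<lambda>q c. V $$ (pick I q, c))"
        by (rule Dm_permute[OF p, of "\<lambda>q c. V $$ (pick I q, c)"])
      finally show "(?h \<circ> ?phi) p = (of_int (sign p) * (\<Prod>q = 0..<j. M $$ (pick I (p q), q))) * Dm j (\<lambda>q c. V $$ (pick I q, c))"
        unfolding o_def 1 by simp
    qed
    also have "\<dots> = Dm j (\<lambda>q c. M $$ (pick I c, q)) * Dm j (\<lambda>q c. V $$ (pick I q, c))"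
      unfolding Dm_leibniz[of j "\<lambda>q c. M $$ (pick I c, q)"] by (simp add: sum_distrib_right)
    also have "Dm j (\<lambda>q c. V $$ (pick I q, c)) = det (submatrix V I UNIV)"
      unfolding Dm_def submatrix_rows_eq[OF V I] by simp
    also have "Dm j (\<lambda>q c. M $$ (pick I c, q)) = det (submatrix M I UNIV)"
    proof -
      have "Dm j (\<lambda>q c. M $$ (pick I c, q)) = det (transpose_mat (submatrix M I UNIV))"
        unfolding Dm_def submatrix_rows_eq[OF M I]
        by (rule arg_cong[where f=det], rule eq_matI, auto)
      also have "\<dots> = det (submatrix M I UNIV)"
        by (rule det_transpose[of _ j], unfold submatrix_rows_eq[OF M I], simp)
      finally show ?thesis .
    qed
    finally show "sum ?h {f\<in>?Fi. f ` {0..<j} = I} = det (submatrix M I UNIV) * det (submatrix V I UNIV)" .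
  qed
  finally show ?thesis by simp
qed

lemma zero_to_n: "{0..n} = {0..<Suc n}" by auto

lemma cb_inner:
  fixes M V :: "real mat"
  assumes M: "M \<in> carrier_mat (n+1) j" and V: "V \<in> carrier_mat (n+1) j"
  shows "ext_inner n j (wedge_cols n M) (wedge_cols n V) = det (transpose_mat M * V)"
proof -
  have "ext_inner n j (wedge_cols n M) (wedge_cols n V) =
    (\<Sum>I\<in>multi_idx {0..<n+1} j. det (submatrix M I UNIV) * det (submatrix V I UNIV))"
    unfolding ext_inner_def wedge_cols_def using M V by (auto simp: zero_to_n intro!: sum.cong)
  also have "\<dots> = det (transpose_mat M * V)" by (rule cauchy_binet[OF M V, symmetric])
  finally show ?thesis .
qed

definition yv :: "nat \<Rightarrow> nat \<Rightarrow> real mat \<Rightarrow> real mat \<Rightarrow> nat \<Rightarrow> nat \<Rightarrow> real" where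
  "yv n s A Vr k c = (\<Sum>l<n+1. ea_vec n s A k $ l * Vr $$ (l,c))"

definition Th :: "nat \<Rightarrow> nat \<Rightarrow> nat \<Rightarrow> real mat \<Rightarrow> real mat \<Rightarrow> nat \<Rightarrow> (nat \<Rightarrow> nat) \<Rightarrow> real" where
  "Th n s j A Vr k t = Dm j (\<lambda>q c. if q = 0 then yv n s A Vr k c else Vr $$ (t q, c))"

definition sJ :: "nat set \<Rightarrow> nat \<Rightarrow> nat" where
  "sJ J q = sorted_list_of_set J ! (q - 1)"

lemma sJ_in: assumes "J \<in> multi_idx {1..n} (j-1)" "1 \<le> q" "q < j"
  shows "sJ J q \<in> J"
proof -
  have fJ: "finite J" using assms(1) unfolding multi_idx_def by (auto intro: finite_subset)
  have "q - 1 < length (sorted_list_of_set J)" using assms fJ unfolding multi_idx_def by auto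
  thus ?thesis unfolding sJ_def using nth_mem fJ by (metis set_sorted_list_of_set)
qed

lemma RA_mat_prod:
  fixes Vr :: "real mat"
  assumes Vr: "Vr \<in> carrier_mat (n+1) j" and J: "J \<in> multi_idx {1..n} (j-1)"
  shows "det (transpose_mat (RA_mat n s j A i J) * Vr) = Th n s j A Vr i (sJ J)"
  unfolding Th_def Dm_def
proof (rule arg_cong[where f=det], rule eq_matI)
  fix q c assume "q < dim_row (mat j j (\<lambda>(q, c). if q = 0 then yv n s A Vr i c else Vr $$ (sJ J q, c)))"
    "c < dim_col (mat j j (\<lambda>(q, c). if q = 0 then yv n s A Vr i c else Vr $$ (sJ J q, c)))"
  hence qc: "q < j" "c < j" by auto
  have R: "RA_mat n s j A i J \<in> carrier_mat (n+1) j" unfolding RA_mat_def by simp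
  have "(transpose_mat (RA_mat n s j A i J) * Vr) $$ (q,c) = (\<Sum>m<n+1. RA_mat n s j A i J $$ (m,q) * Vr $$ (m,c))"
    using R Vr qc by (auto simp: scalar_prod_def atLeast0LessThan)
  also have "\<dots> = (if q = 0 then yv n s A Vr i c else Vr $$ (sJ J q, c))"
  proof (cases "q = 0")
    case True
    thus ?thesis unfolding yv_def RA_mat_def using qc by (auto intro!: sum.cong)
  next
    case False
    have sin: "sJ J q \<in> J" using sJ_in[OF J _ qc(1)] False by auto
    hence sn: "sJ J q < n+1" using J unfolding multi_idx_def by auto
    have "(\<Sum>m<n+1. RA_mat n s j A i J $$ (m,q) * Vr $$ (m,c)) = (\<Sum>m<n+1. if m = sJ J q then Vr $$ (m,c) else 0)"
    proof (rule sum.cong[OF refl])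
      fix m assume "m \<in> {..<n+1}"
      hence "RA_mat n s j A i J $$ (m,q) = (if m = sJ J q then 1 else 0)"
        unfolding RA_mat_def sJ_def using qc False by auto
      thus "RA_mat n s j A i J $$ (m,q) * Vr $$ (m,c) = (if m = sJ J q then Vr $$ (m,c) else 0)" by simp
    qed
    also have "\<dots> = Vr $$ (sJ J q, c)" using sn by (simp add: sum.delta)
    finally show ?thesis using False by simp
  qed
  finally show "(transpose_mat (RA_mat n s j A i J) * Vr) $$ (q,c) = mat j j (\<lambda>(q, c). if q = 0 then yv n s A Vr i c else Vr $$ (sJ J q, c)) $$ (q,c)"
    using qc by simp
qed (insert Vr, auto simp: RA_mat_def)

lemma RA_eq:
  fixes Vr :: "real mat"
  assumes Vr: "Vr \<in> carrier_mat (n+1) j"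
  shows "RA_norm n s j A (wedge_cols n Vr) =
    sqrt (\<Sum>i\<in>{0..s}. \<Sum>J\<in>multi_idx {1..n} (j-1). (Th n s j A Vr i (sJ J))^2)"
  unfolding RA_norm_def
proof (rule arg_cong[where f=sqrt], rule sum.cong[OF refl], rule sum.cong[OF refl])
  fix i J assume J: "J \<in> multi_idx {1..n} (j-1)"
  have R: "RA_mat n s j A i J \<in> carrier_mat (n+1) j" unfolding RA_mat_def by simp
  show "(ext_inner n j (wedge_cols n (RA_mat n s j A i J)) (wedge_cols n Vr))\<^sup>2 = (Th n s j A Vr i (sJ J))\<^sup>2"
    unfolding cb_inner[OF R Vr] RA_mat_prod[OF Vr J] ..
qed

lemma finite_multi_idx: "finite X \<Longrightarrow> finite (multi_idx X j)"
  unfolding multi_idx_def by (rule finite_subset[of _ "Pow X"], auto)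

lemma term_le_sqrt:
  fixes F :: "nat \<Rightarrow> nat set \<Rightarrow> real"
  assumes "i \<in> X" "J \<in> Y i" "finite X" "\<And>i. finite (Y i)"
  shows "\<bar>F i J\<bar> \<le> sqrt (\<Sum>i\<in>X. \<Sum>J\<in>Y i. (F i J)^2)"
proof -
  have "(F i J)^2 \<le> (\<Sum>J\<in>Y i. (F i J)^2)"
    by (rule member_le_sum[of J "Y i" "\<lambda>J. (F i J)^2"], insert assms, auto)
  also have "\<dots> \<le> (\<Sum>i\<in>X. \<Sum>J\<in>Y i. (F i J)^2)"
    by (rule member_le_sum[of i X "\<lambda>i. \<Sum>J\<in>Y i. (F i J)^2"], insert assms, auto intro: sum_nonneg)
  finally show ?thesis by (simp add: real_le_rsqrt)
qed

lemma RA_nonneg: "0 \<le> RA_norm n s j A w" unfolding RA_norm_def by (simp add: sum_nonneg)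

lemma K1:
  fixes Vr :: "real mat"
  assumes Vr: "Vr \<in> carrier_mat (n+1) j" and k: "k \<le> s"
    and t: "\<And>q. 1 \<le> q \<Longrightarrow> q < j \<Longrightarrow> t q \<in> {1..n}"
  shows "\<bar>Th n s j A Vr k t\<bar> \<le> RA_norm n s j A (wedge_cols n Vr)"
proof (cases "inj_on t {1..<j}")
  case False
  then obtain q1 q2 where q: "q1 \<in> {1..<j}" "q2 \<in> {1..<j}" "q1 \<noteq> q2" "t q1 = t q2"
    unfolding inj_on_def by auto
  have "Th n s j A Vr k t = 0" unfolding Th_def
    by (rule Dm_identical[OF q(3)], insert q, auto)
  thus ?thesis using RA_nonneg by simp
next
  case True
  define K where "K = t ` {1..<j}"
  have cK: "card K = j - 1" unfolding K_def using card_image[OF True] by simp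
  have KS: "K \<subseteq> {1..n}" unfolding K_def using t by auto
  have fK: "finite K" using KS finite_subset by auto
  have Km: "K \<in> multi_idx {1..n} (j-1)" unfolding multi_idx_def using cK KS by auto
  define xs where "xs = sorted_list_of_set K"
  have dxs: "distinct xs" and sxs: "set xs = K" and lxs: "length xs = j - 1"
    unfolding xs_def using fK cK by auto
  have bij: "bij_betw ((!) xs) {..<length xs} K" by (rule bij_betw_nth[OF dxs refl sxs[symmetric]])
  define ix where "ix = the_inv_into {..<length xs} ((!) xs)"
  have ix1: "\<And>x. x \<in> K \<Longrightarrow> xs ! (ix x) = x" unfolding ix_def
    by (rule f_the_inv_into_f_bij_betw[OF bij])
  have ix2: "\<And>x. x \<in> K \<Longrightarrow> ix x < j - 1" unfolding ix_def
    using bij_betw_apply[OF bij_betw_the_inv_into[OF bij]] lxs by auto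
  define p where "p = (\<lambda>q. if q = 0 then 0 else if q < j then Suc (ix (t q)) else q)"
  have tK: "\<And>q. 1 \<le> q \<Longrightarrow> q < j \<Longrightarrow> t q \<in> K" unfolding K_def by auto
  have pp: "p permutes {0..<j}"
  proof (rule inj_on_nat_permutes)
    show "inj_on p {0..<j}"
    proof
      fix x y assume x: "x \<in> {0..<j}" and y: "y \<in> {0..<j}" and e: "p x = p y"
      show "x = y"
      proof (cases "x = 0 \<or> y = 0")
        case True thus ?thesis using e x y unfolding p_def by (auto split: if_splits)
      next
        case False
        hence "ix (t x) = ix (t y)" using e x y unfolding p_def by auto
        hence "xs ! ix (t x) = xs ! ix (t y)" by simp
        hence "t x = t y" using ix1 tK x y False by auto
        thus ?thesis using True x y False unfolding inj_on_def by auto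
      qed
    qed
    show "p \<in> {0..<j} \<rightarrow> {0..<j}"
    proof
      fix q assume q: "q \<in> {0..<j}"
      show "p q \<in> {0..<j}"
      proof (cases "q = 0")
        case False
        hence "ix (t q) < j - 1" using ix2 tK q by auto
        thus ?thesis using q False unfolding p_def by auto
      qed (insert q, auto simp: p_def)
    qed
    show "\<And>i. i \<notin> {0..<j} \<Longrightarrow> p i = i" unfolding p_def by auto
  qed simp
  let ?G = "\<lambda>q c. if q = 0 then yv n s A Vr k c else Vr $$ (sJ K q, c)"
  have "Th n s j A Vr k t = Dm j (\<lambda>q c. ?G (p q) c)" unfolding Th_def
  proof (rule Dm_cong)
    fix q c assume q: "q < j" "c < j"
    show "(if q = 0 then yv n s A Vr k c else Vr $$ (t q, c)) = ?G (p q) c"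
    proof (cases "q = 0")
      case False
      hence "sJ K (p q) = t q" unfolding p_def sJ_def xs_def[symmetric] using q ix1 tK by auto
      thus ?thesis using False q unfolding p_def by auto
    qed (simp add: p_def)
  qed
  also have "\<dots> = of_int (sign p) * Th n s j A Vr k (sJ K)" unfolding Th_def
    by (rule Dm_permute[OF pp])
  finally have "\<bar>Th n s j A Vr k t\<bar> = \<bar>Th n s j A Vr k (sJ K)\<bar>"
    by (simp add: sign_def abs_mult)
  also have "\<dots> \<le> sqrt (\<Sum>i\<in>{0..s}. \<Sum>J\<in>multi_idx {1..n} (j-1). (Th n s j A Vr i (sJ J))^2)"
    by (rule term_le_sqrt[where F="\<lambda>i J. Th n s j A Vr i (sJ J)"], insert k Km, auto intro: finite_multi_idx)
  also have "\<dots> = RA_norm n s j A (wedge_cols n Vr)" by (rule RA_eq[OF Vr, symmetric])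
  finally show ?thesis .
qed

lemma ea_idx: "l < n+1 \<Longrightarrow> ea_vec n s A k $ l = (if l = k then 1 else 0) + (if s < l then A $$ (k, l-(s+1)) else 0)"
  unfolding ea_vec_def by auto

definition SA :: "nat \<Rightarrow> nat \<Rightarrow> real mat \<Rightarrow> real" where
  "SA n s A = (\<Sum>i\<in>{0..s}. \<Sum>l\<in>{s+1..n}. \<bar>A $$ (i, l-(s+1))\<bar>)"

lemma SA_nonneg: "0 \<le> SA n s A" unfolding SA_def by (simp add: sum_nonneg)

lemma ea_abs_sum: assumes k: "k \<le> s" "k \<le> n"
  shows "(\<Sum>l\<in>{0..n}. \<bar>ea_vec n s A k $ l\<bar>) \<le> 1 + SA n s A"
proof -
  have "(\<Sum>l\<in>{0..n}. \<bar>ea_vec n s A k $ l\<bar>) \<le> (\<Sum>l\<in>{0..n}. (if l = k then 1 else 0) + (if s < l then \<bar>A $$ (k, l-(s+1))\<bar> else 0))"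
    by (rule sum_mono, subst ea_idx, auto)
  also have "\<dots> = 1 + (\<Sum>l\<in>{0..n}. (if s < l then \<bar>A $$ (k, l-(s+1))\<bar> else 0))"
    using k by (simp add: sum.distrib)
  also have "(\<Sum>l\<in>{0..n}. (if s < l then \<bar>A $$ (k, l-(s+1))\<bar> else 0)) = (\<Sum>l\<in>{s+1..n}. \<bar>A $$ (k, l-(s+1))\<bar>)"
  proof -
    have "(\<Sum>l\<in>{0..n}. (if s < l then \<bar>A $$ (k, l-(s+1))\<bar> else 0)) = (\<Sum>l\<in>{l\<in>{0..n}. s < l}. \<bar>A $$ (k, l-(s+1))\<bar>)"
      by (rule sum.inter_filter[symmetric], simp)
    also have "{l\<in>{0..n}. s < l} = {s+1..n}" by auto
    finally show ?thesis .
  qed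
  also have "(\<Sum>l\<in>{s+1..n}. \<bar>A $$ (k, l-(s+1))\<bar>) \<le> SA n s A" unfolding SA_def
    by (rule member_le_sum[of k "{0..s}" "\<lambda>i. \<Sum>l\<in>{s+1..n}. \<bar>A $$ (i, l-(s+1))\<bar>"], insert k, auto intro: sum_nonneg)
  finally show ?thesis by simp
qed

lemma lin_bound:
  fixes a X :: "'b \<Rightarrow> real"
  assumes "finite S" "\<And>m. m \<in> S \<Longrightarrow> a m \<noteq> 0 \<Longrightarrow> \<bar>X m\<bar> \<le> Bd" "0 \<le> Bd"
  shows "\<bar>\<Sum>m\<in>S. a m * X m\<bar> \<le> (\<Sum>m\<in>S. \<bar>a m\<bar>) * Bd"
proof -
  have "\<bar>\<Sum>m\<in>S. a m * X m\<bar> \<le> (\<Sum>m\<in>S. \<bar>a m * X m\<bar>)" by (rule sum_abs)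
  also have "\<dots> \<le> (\<Sum>m\<in>S. \<bar>a m\<bar> * Bd)"
  proof (rule sum_mono)
    fix m assume m: "m \<in> S"
    show "\<bar>a m * X m\<bar> \<le> \<bar>a m\<bar> * Bd"
    proof (cases "a m = 0")
      case False
      thus ?thesis using assms(2)[OF m False] by (simp add: abs_mult mult_left_mono)
    qed simp
  qed
  finally show ?thesis by (simp add: sum_distrib_right)
qed

lemma yv_expand: "yv n s A Vr k c = (\<Sum>l\<in>{0..n}. ea_vec n s A k $ l * Vr $$ (l,c))"
  unfolding yv_def by (rule sum.cong, auto)

lemma K2:
  fixes Vr :: "real mat"
  assumes Vr: "Vr \<in> carrier_mat (n+1) j" and k: "k \<le> s" and sn: "s < n"
    and t: "\<And>q. 1 \<le> q \<Longrightarrow> q < j \<Longrightarrow> t q \<in> {0..n}"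
  shows "\<bar>Th n s j A Vr k t\<bar> \<le> (1 + SA n s A)^2 * RA_norm n s j A (wedge_cols n Vr)"
proof -
  let ?RA = "RA_norm n s j A (wedge_cols n Vr)"
  let ?S = "SA n s A"
  have RA0: "0 \<le> ?RA" by (rule RA_nonneg)
  have S0: "0 \<le> ?S" by (rule SA_nonneg)
  have RAle: "?RA \<le> (1 + ?S) * ?RA" using RA0 S0 by (simp add: mult_le_cancel_right1)
  have RAle2: "(1 + ?S) * ?RA \<le> (1 + ?S)^2 * ?RA" using RA0 S0
    by (simp add: power2_eq_square mult_right_mono)
  show ?thesis
  proof (cases "\<forall>q. 1 \<le> q \<and> q < j \<longrightarrow> t q \<noteq> 0")
    case True
    have "\<bar>Th n s j A Vr k t\<bar> \<le> ?RA" proof (rule K1[OF Vr k])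
      fix q assume q: "1 \<le> q" "q < j"
      thus "t q \<in> {1..n}" using t[OF q] True by auto
    qed
    thus ?thesis using RAle RAle2 by linarith
  next
    case False
    then obtain q0 where q0: "1 \<le> q0" "q0 < j" "t q0 = 0" by auto
    show ?thesis
    proof (cases "inj_on t {1..<j}")
      case False
      then obtain q1 q2 where q: "q1 \<in> {1..<j}" "q2 \<in> {1..<j}" "q1 \<noteq> q2" "t q1 = t q2"
        unfolding inj_on_def by auto
      have "Th n s j A Vr k t = 0" unfolding Th_def
        by (rule Dm_identical[OF q(3)], insert q, auto)
      thus ?thesis using RA0 S0 by simp
    next
      case True
      have tnz: "\<And>q. 1 \<le> q \<Longrightarrow> q < j \<Longrightarrow> q \<noteq> q0 \<Longrightarrow> t q \<noteq> 0"
      proof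
        fix q assume "1 \<le> q" "q < j" "q \<noteq> q0" "t q = 0"
        hence "t q = t q0" using q0 by simp
        from inj_onD[OF True this] show False using \<open>1 \<le> q\<close> \<open>q < j\<close> \<open>q \<noteq> q0\<close> q0 by auto
      qed
      have tupd: "\<And>m q. m \<in> {1..n} \<Longrightarrow> 1 \<le> q \<Longrightarrow> q < j \<Longrightarrow> (t(q0 := m)) q \<in> {1..n}"
      proof -
        fix m q assume m: "m \<in> {1..n}" and q: "1 \<le> q" "q < j"
        show "(t(q0 := m)) q \<in> {1..n}"
        proof (cases "q = q0")
          case False
          hence "t q \<noteq> 0" "t q \<in> {0..n}" using tnz[OF q False] t[OF q] by auto
          thus ?thesis using False by auto
        qed (insert m, auto)
      qed
      let ?g = "\<lambda>q c. if q = 0 then yv n s A Vr k c else Vr $$ (t q, c)"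
      define a where "a = (\<lambda>m. if m = 0 then 1 else - (if s < m then A $$ (0, m-(s+1)) else 0) :: real)"
      define h where "h = (\<lambda>m c. if m = 0 then yv n s A Vr 0 c else Vr $$ (m,c))"
      have row: "\<And>c. c < j \<Longrightarrow> ?g q0 c = (\<Sum>m\<in>{0..n}. a m * h m c)"
      proof -
        fix c assume c: "c < j"
        have "(\<Sum>m\<in>{0..n}. a m * h m c) = (\<Sum>m\<in>{0..n}. (if m = 0 then yv n s A Vr 0 c else 0) - (if s < m then A $$ (0, m-(s+1)) else 0) * Vr $$ (m,c))"
          by (rule sum.cong, auto simp: a_def h_def)
        also have "\<dots> = yv n s A Vr 0 c - (\<Sum>m\<in>{0..n}. (if s < m then A $$ (0, m-(s+1)) else 0) * Vr $$ (m,c))"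
          by (simp add: sum_subtractf)
        also have "yv n s A Vr 0 c = (\<Sum>m\<in>{0..n}. (if m = 0 then Vr $$ (m,c) else 0) + (if s < m then A $$ (0, m-(s+1)) else 0) * Vr $$ (m,c))"
          unfolding yv_expand by (rule sum.cong, auto simp: ea_idx distrib_right)
        also have "\<dots> = Vr $$ (0,c) + (\<Sum>m\<in>{0..n}. (if s < m then A $$ (0, m-(s+1)) else 0) * Vr $$ (m,c))"
          by (simp add: sum.distrib)
        finally show "?g q0 c = (\<Sum>m\<in>{0..n}. a m * h m c)" using q0 by simp
      qed
      have "Th n s j A Vr k t = (\<Sum>m\<in>{0..n}. a m * Dm j (?g(q0 := h m)))"
        unfolding Th_def by (rule Dm_lin_row[where g="?g" and a=a and h=h and r=q0 and S="{0..n}"], insert q0 row, auto)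
      also have "\<bar>\<dots>\<bar> \<le> (\<Sum>m\<in>{0..n}. \<bar>a m\<bar>) * ((1 + ?S) * ?RA)"
      proof (rule lin_bound)
        show "0 \<le> (1 + ?S) * ?RA" using RA0 S0 by simp
        fix m assume m: "m \<in> {0..n}" and am: "a m \<noteq> 0"
        show "\<bar>Dm j (?g(q0 := h m))\<bar> \<le> (1 + ?S) * ?RA"
        proof (cases "m = 0")
          case False
          have "Dm j (?g(q0 := h m)) = Th n s j A Vr k (t(q0 := m))" unfolding Th_def
            by (rule Dm_cong, insert q0 False, auto simp: h_def)
          also have "\<bar>\<dots>\<bar> \<le> ?RA" by (rule K1[OF Vr k], rule tupd, insert m False, auto)
          finally show ?thesis using RAle by linarith
        next
          case True
          let ?g1 = "?g(q0 := h 0)"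
          show ?thesis
          proof (cases "k = 0")
            case True
            have "Dm j ?g1 = 0"
              by (rule Dm_identical[of 0 q0], insert q0 True \<open>m = 0\<close>, auto simp: h_def)
            thus ?thesis using RA0 S0 \<open>m = 0\<close> by simp
          next
            case kn0: False
            have row0: "\<And>c. c < j \<Longrightarrow> ?g1 0 c = (\<Sum>l\<in>{0..n}. ea_vec n s A k $ l * Vr $$ (l,c))"
              using q0 by (simp add: yv_expand)
            have eq1: "Dm j ?g1 = (\<Sum>l\<in>{0..n}. ea_vec n s A k $ l * Dm j (?g1(0 := \<lambda>c. Vr $$ (l,c))))"
              by (rule Dm_lin_row[where g="?g1" and a="\<lambda>l. ea_vec n s A k $ l" and h="\<lambda>l c. Vr $$ (l,c)" and r=0 and S="{0..n}"], insert q0 row0, auto)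
            have le1: "\<bar>\<Sum>l\<in>{0..n}. ea_vec n s A k $ l * Dm j (?g1(0 := \<lambda>c. Vr $$ (l,c)))\<bar> \<le> (\<Sum>l\<in>{0..n}. \<bar>ea_vec n s A k $ l\<bar>) * ?RA"
            proof (rule lin_bound[OF _ _ RA0])
              fix l assume l: "l \<in> {0..n}" and el: "ea_vec n s A k $ l \<noteq> 0"
              have "ea_vec n s A k $ l = (if l = k then 1 else 0) + (if s < l then A $$ (k, l-(s+1)) else 0)"
                by (rule ea_idx, insert l, auto)
              hence l0: "l \<noteq> 0" using el kn0 by (cases "l = 0", auto)
              let ?g2 = "?g1(0 := \<lambda>c. Vr $$ (l,c))"
              have "Dm j (\<lambda>q c. ?g2 (Transposition.transpose 0 q0 q) c) = - Dm j ?g2"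
                by (rule Dm_swap, insert q0, auto)
              moreover have "Dm j (\<lambda>q c. ?g2 (Transposition.transpose 0 q0 q) c) = Th n s j A Vr 0 (t(q0 := l))"
                unfolding Th_def
              proof (rule Dm_cong)
                fix q c assume "q < j" "c < j"
                show "?g2 (Transposition.transpose 0 q0 q) c = (if q = 0 then yv n s A Vr 0 c else Vr $$ ((t(q0 := l)) q, c))"
                  using q0 by (cases "q = 0"; cases "q = q0"; auto simp: h_def Transposition.transpose_def)
              qed
              moreover have "\<bar>Th n s j A Vr 0 (t(q0 := l))\<bar> \<le> ?RA"
                by (rule K1[OF Vr], simp, rule tupd, insert l l0, auto)
              ultimately show "\<bar>Dm j ?g2\<bar> \<le> ?RA" by simp
            qed simp
            have le2: "(\<Sum>l\<in>{0..n}. \<bar>ea_vec n s A k $ l\<bar>) * ?RA \<le> (1 + ?S) * ?RA"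
              by (rule mult_right_mono[OF ea_abs_sum RA0], insert k sn, auto)
            have "\<bar>Dm j ?g1\<bar> \<le> (1 + ?S) * ?RA" using eq1 le1 le2 by linarith
            thus ?thesis using \<open>m = 0\<close> by simp
          qed
        qed
      qed simp
      also have "(\<Sum>m\<in>{0..n}. \<bar>a m\<bar>) = (\<Sum>m\<in>{0..n}. \<bar>ea_vec n s A 0 $ m\<bar>)"
        by (rule sum.cong, auto simp: a_def ea_idx)
      also have "\<dots> \<le> 1 + ?S" by (rule ea_abs_sum, auto)
      finally have "\<bar>Th n s j A Vr k t\<bar> \<le> (1 + ?S) * ((1 + ?S) * ?RA)"
        by (rule order.trans, intro mult_right_mono, insert RA0 S0, auto)
      thus ?thesis by (simp add: power2_eq_square mult.assoc)
    qed
  qed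
qed

lemma BA_idx:
  fixes A Br :: "real mat"
  assumes A: "A \<in> carrier_mat (s+1) (n-s)" and Br: "Br \<in> carrier_mat (s+1) (s+1)"
    and i: "i \<le> s" and c: "c < n - s"
  shows "(Br * A) $$ (i,c) = (\<Sum>k<s+1. Br $$ (i,k) * A $$ (k,c))"
  using A Br i c by (auto simp: scalar_prod_def atLeast0LessThan)

lemma row0_id:
  fixes A Br :: "real mat"
  assumes sn: "s < n" and A: "A \<in> carrier_mat (s+1) (n-s)" and Br: "Br \<in> carrier_mat (s+1) (s+1)"
    and i: "i \<le> s" and l: "l < n+1"
  shows "(\<Sum>m<n+1. ea_vec n s (Br*A) i $ m * (if m \<le> s \<and> l \<le> s then Br $$ (m,l) else if m = l then 1 else 0))
    = (\<Sum>k<s+1. Br $$ (i,k) * ea_vec n s A k $ l)"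
proof (cases "l \<le> s")
  case True
  have "(\<Sum>m<n+1. ea_vec n s (Br*A) i $ m * (if m \<le> s \<and> l \<le> s then Br $$ (m,l) else if m = l then 1 else 0))
      = (\<Sum>m<n+1. if m = i then Br $$ (i,l) else 0)"
  proof (rule sum.cong[OF refl])
    fix m assume m: "m \<in> {..<n+1}"
    show "ea_vec n s (Br*A) i $ m * (if m \<le> s \<and> l \<le> s then Br $$ (m,l) else if m = l then 1 else 0) = (if m = i then Br $$ (i,l) else 0)"
      using m True i by (cases "m \<le> s", auto simp: ea_idx)
  qed
  also have "\<dots> = Br $$ (i,l)" using i sn by simp
  also have "\<dots> = (\<Sum>k<s+1. if k = l then Br $$ (i,l) else 0)" using True by simp
  also have "\<dots> = (\<Sum>k<s+1. Br $$ (i,k) * ea_vec n s A k $ l)"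
    by (rule sum.cong[OF refl], insert True l, auto simp: ea_idx)
  finally show ?thesis .
next
  case False
  have "(\<Sum>m<n+1. ea_vec n s (Br*A) i $ m * (if m \<le> s \<and> l \<le> s then Br $$ (m,l) else if m = l then 1 else 0))
      = (\<Sum>m<n+1. if m = l then (Br*A) $$ (i, l-(s+1)) else 0)"
  proof (rule sum.cong[OF refl])
    fix m assume m: "m \<in> {..<n+1}"
    show "ea_vec n s (Br*A) i $ m * (if m \<le> s \<and> l \<le> s then Br $$ (m,l) else if m = l then 1 else 0) = (if m = l then (Br*A) $$ (i, l-(s+1)) else 0)"
      using m False i by (auto simp: ea_idx)
  qed
  also have "\<dots> = (Br*A) $$ (i, l-(s+1))" using l by simp
  also have "\<dots> = (\<Sum>k<s+1. Br $$ (i,k) * A $$ (k,l-(s+1)))"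
    by (rule BA_idx[OF A Br i], insert False l, auto)
  also have "\<dots> = (\<Sum>k<s+1. Br $$ (i,k) * ea_vec n s A k $ l)"
    by (rule sum.cong[OF refl], insert False l, auto simp: ea_idx)
  finally show ?thesis .
qed

declare sum.lessThan_Suc[simp del]

definition G0e :: "nat \<Rightarrow> real mat \<Rightarrow> nat \<Rightarrow> nat \<Rightarrow> real" where
  "G0e s Br a b = (if a \<le> s \<and> b \<le> s then Br $$ (a,b) else if a = b then 1 else 0)"

definition aco :: "nat \<Rightarrow> nat \<Rightarrow> real mat \<Rightarrow> real \<Rightarrow> nat \<Rightarrow> nat set \<Rightarrow> nat \<Rightarrow> nat \<Rightarrow> real" where
  "aco n s Br dr i J q m = (if q = 0 then (if n+1 \<le> m then dr * Br $$ (i, m-(n+1)) else 0)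
     else (if m < n+1 then dr * G0e s Br (sJ J q) m else 0))"

definition hfun :: "nat \<Rightarrow> nat \<Rightarrow> real mat \<Rightarrow> real mat \<Rightarrow> nat \<Rightarrow> nat \<Rightarrow> real" where
  "hfun n s A Vr m c = (if m < n+1 then Vr $$ (m,c) else yv n s A Vr (m-(n+1)) c)"

lemma split_sum: fixes F :: "nat \<Rightarrow> real" and N K :: nat shows "(\<Sum>m\<in>{0..<N+K}. F m) = (\<Sum>m\<in>{0..<N}. F m) + (\<Sum>k\<in>{0..<K}. F (k+N))"
proof -
  have "(\<Sum>m\<in>{0..<N+K}. F m) = (\<Sum>m\<in>{0..<N}. F m) + (\<Sum>m\<in>{N..<N+K}. F m)"
    using sum.atLeastLessThan_concat[of 0 N "N+K" F] by simp
  also have "(\<Sum>m\<in>{N..<N+K}. F m) = (\<Sum>k\<in>{0..<K}. F (k+N))"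
    using sum.shift_bounds_nat_ivl[of F 0 N K] by (simp add: add.commute)
  finally show ?thesis .
qed

lemma row_id:
  fixes A Br Vr Gr :: "real mat"
  assumes sn: "s < n" and A: "A \<in> carrier_mat (s+1) (n-s)" and Br: "Br \<in> carrier_mat (s+1) (s+1)"
    and Vr: "Vr \<in> carrier_mat (n+1) j" and Gr: "Gr \<in> carrier_mat (n+1) (n+1)"
    and Gr_idx: "\<And>a b. a < n+1 \<Longrightarrow> b < n+1 \<Longrightarrow> Gr $$ (a,b) = dr * G0e s Br a b"
    and i: "i \<le> s" and J: "J \<in> multi_idx {1..n} (j-1)" and q: "q < j" and c: "c < j"
  shows "(transpose_mat (RA_mat n s j (Br*A) i J) * (Gr*Vr)) $$ (q,c) =
    (\<Sum>m\<in>{0..<n+1+(s+1)}. aco n s Br dr i J q m * hfun n s A Vr m c)"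
proof -
  let ?R = "RA_mat n s j (Br*A) i J"
  have R: "?R \<in> carrier_mat (n+1) j" unfolding RA_mat_def by simp
  have GV: "\<And>m. m < n+1 \<Longrightarrow> (Gr*Vr) $$ (m,c) = (\<Sum>l<n+1. dr * G0e s Br m l * Vr $$ (l,c))"
    using Gr Vr c Gr_idx by (auto simp: scalar_prod_def atLeast0LessThan intro!: sum.cong)
  have "(transpose_mat ?R * (Gr*Vr)) $$ (q,c) = (\<Sum>m<n+1. ?R $$ (m,q) * (Gr*Vr) $$ (m,c))"
    using R Gr Vr q c by (auto simp: scalar_prod_def atLeast0LessThan)
  also have "\<dots> = (\<Sum>m<n+1. ?R $$ (m,q) * (\<Sum>l<n+1. dr * G0e s Br m l * Vr $$ (l,c)))"
    by (rule sum.cong[OF refl], simp add: GV)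
  also have "\<dots> = (\<Sum>m\<in>{0..<n+1+(s+1)}. aco n s Br dr i J q m * hfun n s A Vr m c)"
  proof (cases "q = 0")
    case True
    have "(\<Sum>m<n+1. ?R $$ (m,q) * (\<Sum>l<n+1. dr * G0e s Br m l * Vr $$ (l,c)))
       = (\<Sum>m<n+1. \<Sum>l<n+1. dr * (ea_vec n s (Br*A) i $ m * G0e s Br m l) * Vr $$ (l,c))"
    proof (rule sum.cong[OF refl])
      fix m assume m: "m \<in> {..<n+1}"
      hence "?R $$ (m,q) = ea_vec n s (Br*A) i $ m" unfolding RA_mat_def using True q by auto
      thus "?R $$ (m,q) * (\<Sum>l<n+1. dr * G0e s Br m l * Vr $$ (l,c)) = (\<Sum>l<n+1. dr * (ea_vec n s (Br*A) i $ m * G0e s Br m l) * Vr $$ (l,c))"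
        by (simp add: sum_distrib_left algebra_simps del: sum.lessThan_Suc)
    qed
    also have "\<dots> = (\<Sum>l<n+1. \<Sum>m<n+1. dr * (ea_vec n s (Br*A) i $ m * G0e s Br m l) * Vr $$ (l,c))"
      by (rule sum.swap)
    also have "\<dots> = (\<Sum>l<n+1. dr * (\<Sum>m<n+1. ea_vec n s (Br*A) i $ m * G0e s Br m l) * Vr $$ (l,c))"
      by (simp add: sum_distrib_left sum_distrib_right)
    also have "\<dots> = (\<Sum>l<n+1. dr * (\<Sum>k<s+1. Br $$ (i,k) * ea_vec n s A k $ l) * Vr $$ (l,c))"
      by (rule sum.cong[OF refl], unfold G0e_def, subst row0_id[OF sn A Br i], auto)
    also have "\<dots> = (\<Sum>k<s+1. dr * Br $$ (i,k) * yv n s A Vr k c)"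
      unfolding yv_def by (simp add: sum_distrib_left sum_distrib_right algebra_simps, rule sum.swap)
    also have "\<dots> = (\<Sum>m\<in>{0..<n+1+(s+1)}. aco n s Br dr i J q m * hfun n s A Vr m c)"
      unfolding split_sum using True by (simp add: aco_def hfun_def atLeast0LessThan sum.lessThan_Suc)
    finally show ?thesis .
  next
    case False
    have sJn: "sJ J q < n+1" using sJ_in[OF J _ q] False J unfolding multi_idx_def by auto
    have "(\<Sum>m<n+1. ?R $$ (m,q) * (\<Sum>l<n+1. dr * G0e s Br m l * Vr $$ (l,c)))
       = (\<Sum>m<n+1. if m = sJ J q then (\<Sum>l<n+1. dr * G0e s Br m l * Vr $$ (l,c)) else 0)"
    proof (rule sum.cong[OF refl])
      fix m assume "m \<in> {..<n+1}"
      hence "?R $$ (m,q) = (if m = sJ J q then 1 else 0)"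
        unfolding RA_mat_def sJ_def using q False by auto
      thus "?R $$ (m,q) * (\<Sum>l<n+1. dr * G0e s Br m l * Vr $$ (l,c)) = (if m = sJ J q then (\<Sum>l<n+1. dr * G0e s Br m l * Vr $$ (l,c)) else 0)" by simp
    qed
    also have "\<dots> = (\<Sum>l<n+1. dr * G0e s Br (sJ J q) l * Vr $$ (l,c))" using sJn by simp
    also have "\<dots> = (\<Sum>m\<in>{0..<n+1+(s+1)}. aco n s Br dr i J q m * hfun n s A Vr m c)"
      unfolding split_sum using False by (simp add: aco_def hfun_def atLeast0LessThan sum.lessThan_Suc)
    finally show ?thesis .
  qed
  finally show ?thesis .
qed

definition CT :: "nat \<Rightarrow> nat \<Rightarrow> nat \<Rightarrow> real mat \<Rightarrow> real \<Rightarrow> nat \<Rightarrow> nat set \<Rightarrow> real" where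
  "CT n s j Br dr i J = (\<Sum>f\<in>Pi\<^sub>E {0..<j} (\<lambda>_. {0..<n+1+(s+1)}). \<bar>\<Prod>q=0..<j. aco n s Br dr i J q (f q)\<bar>)"

lemma Th'_bound:
  fixes A Br Vr Gr :: "real mat"
  assumes sn: "s < n" and A: "A \<in> carrier_mat (s+1) (n-s)" and Br: "Br \<in> carrier_mat (s+1) (s+1)"
    and Vr: "Vr \<in> carrier_mat (n+1) j" and Gr: "Gr \<in> carrier_mat (n+1) (n+1)"
    and Gr_idx: "\<And>a b. a < n+1 \<Longrightarrow> b < n+1 \<Longrightarrow> Gr $$ (a,b) = dr * G0e s Br a b"
    and i: "i \<le> s" and J: "J \<in> multi_idx {1..n} (j-1)" and j: "1 \<le> j"
  shows "\<bar>det (transpose_mat (RA_mat n s j (Br*A) i J) * (Gr*Vr))\<bar> \<le>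
    CT n s j Br dr i J * ((1 + SA n s A)^2 * RA_norm n s j A (wedge_cols n Vr))"
proof -
  let ?S = "{0..<n+1+(s+1)}"
  let ?R = "RA_mat n s j (Br*A) i J"
  have R: "?R \<in> carrier_mat (n+1) j" unfolding RA_mat_def by simp
  have "det (transpose_mat ?R * (Gr*Vr)) = Dm j (\<lambda>q c. \<Sum>m\<in>?S. aco n s Br dr i J q m * hfun n s A Vr m c)"
    unfolding Dm_def
  proof (rule arg_cong[where f=det], rule eq_matI)
    fix q c assume "q < dim_row (mat j j (\<lambda>(q,c). \<Sum>m\<in>?S. aco n s Br dr i J q m * hfun n s A Vr m c))"
      "c < dim_col (mat j j (\<lambda>(q,c). \<Sum>m\<in>?S. aco n s Br dr i J q m * hfun n s A Vr m c))"
    hence qc: "q < j" "c < j" by auto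
    show "(transpose_mat ?R * (Gr*Vr)) $$ (q,c) = mat j j (\<lambda>(q,c). \<Sum>m\<in>?S. aco n s Br dr i J q m * hfun n s A Vr m c) $$ (q,c)"
      using row_id[OF sn A Br Vr Gr Gr_idx i J qc] qc by simp
  qed (insert R Gr Vr, auto)
  also have "\<dots> = (\<Sum>f\<in>Pi\<^sub>E {0..<j} (\<lambda>_. ?S). (\<Prod>q = 0..<j. aco n s Br dr i J q (f q)) * Dm j (\<lambda>q c. hfun n s A Vr (f q) c))"
    by (rule Dm_multilin, auto)
  finally have eq: "det (transpose_mat ?R * (Gr*Vr)) = \<dots>" .
  have "\<bar>(\<Sum>f\<in>Pi\<^sub>E {0..<j} (\<lambda>_. ?S). (\<Prod>q = 0..<j. aco n s Br dr i J q (f q)) * Dm j (\<lambda>q c. hfun n s A Vr (f q) c))\<bar>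
     \<le> (\<Sum>f\<in>Pi\<^sub>E {0..<j} (\<lambda>_. ?S). \<bar>\<Prod>q = 0..<j. aco n s Br dr i J q (f q)\<bar>) * ((1 + SA n s A)^2 * RA_norm n s j A (wedge_cols n Vr))"
  proof (rule lin_bound)
    show "finite (Pi\<^sub>E {0..<j} (\<lambda>_. ?S))" by (rule finite_PiE, auto)
    show "0 \<le> (1 + SA n s A)^2 * RA_norm n s j A (wedge_cols n Vr)" using RA_nonneg by simp
    fix f assume f: "f \<in> Pi\<^sub>E {0..<j} (\<lambda>_. ?S)" and nz: "(\<Prod>q = 0..<j. aco n s Br dr i J q (f q)) \<noteq> 0"
    have nzq: "\<And>q. q < j \<Longrightarrow> aco n s Br dr i J q (f q) \<noteq> 0"
      using nz by (auto simp: prod_zero_iff)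
    have f0: "n+1 \<le> f 0" using nzq[of 0] j unfolding aco_def by (auto split: if_splits)
    have f0': "f 0 < n+1+(s+1)" using f j by (auto simp: PiE_def Pi_def)
    have fq: "\<And>q. 1 \<le> q \<Longrightarrow> q < j \<Longrightarrow> f q < n+1"
    proof -
      fix q assume "1 \<le> q" "q < j"
      thus "f q < n+1" using nzq[of q] unfolding aco_def by (auto split: if_splits)
    qed
    have "Dm j (\<lambda>q c. hfun n s A Vr (f q) c) = Th n s j A Vr (f 0 - (n+1)) f"
      unfolding Th_def by (rule Dm_cong, insert f0 fq, auto simp: hfun_def)
    also have "\<bar>\<dots>\<bar> \<le> (1 + SA n s A)^2 * RA_norm n s j A (wedge_cols n Vr)"
    proof (rule K2[OF Vr _ sn])
      show "f 0 - (n+1) \<le> s" using f0 f0' by simp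
      fix q assume "1 \<le> q" "q < j"
      from fq[OF this] show "f q \<in> {0..n}" by simp
    qed
    finally show "\<bar>Dm j (\<lambda>q c. hfun n s A Vr (f q) c)\<bar> \<le> (1 + SA n s A)^2 * RA_norm n s j A (wedge_cols n Vr)" .
  qed
  thus ?thesis unfolding eq CT_def .
qed

definition Ctot :: "nat \<Rightarrow> nat \<Rightarrow> nat \<Rightarrow> real mat \<Rightarrow> real \<Rightarrow> real" where
  "Ctot n s j Br dr = (\<Sum>i\<in>{0..s}. \<Sum>J\<in>multi_idx {1..n} (j-1). CT n s j Br dr i J)"

definition Cf :: "nat \<Rightarrow> nat \<Rightarrow> nat \<Rightarrow> real mat \<Rightarrow> real \<Rightarrow> real mat \<Rightarrow> real" where
  "Cf n s j Br dr A = sqrt (real ((s+1) * card (multi_idx {1..n} (j-1)))) * Ctot n s j Br dr * (1 + SA n s A)^2"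

lemma CT_nonneg: "0 \<le> CT n s j Br dr i J" unfolding CT_def by (simp add: sum_nonneg)

lemma CT_le: assumes "i \<le> s" "J \<in> multi_idx {1..n} (j-1)"
  shows "CT n s j Br dr i J \<le> Ctot n s j Br dr"
proof -
  have fin: "finite (multi_idx {1..n} (j-1))" by (rule finite_multi_idx, simp)
  have "CT n s j Br dr i J \<le> (\<Sum>J\<in>multi_idx {1..n} (j-1). CT n s j Br dr i J)"
    by (rule member_le_sum, insert assms fin CT_nonneg, auto)
  also have "\<dots> \<le> Ctot n s j Br dr" unfolding Ctot_def
    by (rule member_le_sum[of i "{0..s}" "\<lambda>i. \<Sum>J\<in>multi_idx {1..n} (j-1). CT n s j Br dr i J"],
        insert assms, auto intro: sum_nonneg CT_nonneg)
  finally show ?thesis .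
qed

lemma RA'_bound:
  fixes A Br Vr Gr :: "real mat"
  assumes sn: "s < n" and A: "A \<in> carrier_mat (s+1) (n-s)" and Br: "Br \<in> carrier_mat (s+1) (s+1)"
    and Vr: "Vr \<in> carrier_mat (n+1) j" and Gr: "Gr \<in> carrier_mat (n+1) (n+1)"
    and Gr_idx: "\<And>a b. a < n+1 \<Longrightarrow> b < n+1 \<Longrightarrow> Gr $$ (a,b) = dr * G0e s Br a b"
    and j: "1 \<le> j"
  shows "RA_norm n s j (Br*A) (wedge_cols n (Gr*Vr)) \<le> Cf n s j Br dr A * RA_norm n s j A (wedge_cols n Vr)"
proof -
  let ?K = "(1 + SA n s A)^2 * RA_norm n s j A (wedge_cols n Vr)"
  let ?C = "Ctot n s j Br dr"
  let ?M = "multi_idx {1..n} (j-1)"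
  have K0: "0 \<le> ?K" using RA_nonneg by simp
  have C0: "0 \<le> ?C" unfolding Ctot_def by (auto intro!: sum_nonneg CT_nonneg)
  have GV: "Gr * Vr \<in> carrier_mat (n+1) j" using Gr Vr by auto
  have "RA_norm n s j (Br*A) (wedge_cols n (Gr*Vr)) =
     sqrt (\<Sum>i\<in>{0..s}. \<Sum>J\<in>?M. (det (transpose_mat (RA_mat n s j (Br*A) i J) * (Gr*Vr)))^2)"
    unfolding RA_norm_def
  proof (rule arg_cong[where f=sqrt], rule sum.cong[OF refl], rule sum.cong[OF refl])
    fix i J
    have R: "RA_mat n s j (Br*A) i J \<in> carrier_mat (n+1) j" unfolding RA_mat_def by simp
    show "(ext_inner n j (wedge_cols n (RA_mat n s j (Br*A) i J)) (wedge_cols n (Gr*Vr)))\<^sup>2 =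
      (det (transpose_mat (RA_mat n s j (Br*A) i J) * (Gr*Vr)))\<^sup>2"
      unfolding cb_inner[OF R GV] ..
  qed
  also have "\<dots> \<le> sqrt (\<Sum>i\<in>{0..s}. \<Sum>J\<in>?M. (?C * ?K)^2)"
  proof (rule real_sqrt_le_mono, rule sum_mono, rule sum_mono)
    fix i J assume i: "i \<in> {0..s}" and J: "J \<in> ?M"
    have "\<bar>det (transpose_mat (RA_mat n s j (Br*A) i J) * (Gr*Vr))\<bar> \<le> CT n s j Br dr i J * ?K"
      by (rule Th'_bound[OF sn A Br Vr Gr Gr_idx _ J j], insert i, auto)
    also have "\<dots> \<le> ?C * ?K" by (rule mult_right_mono[OF CT_le K0], insert i J, auto)
    finally have "\<bar>det (transpose_mat (RA_mat n s j (Br*A) i J) * (Gr*Vr))\<bar> \<le> ?C * ?K" .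
    thus "(det (transpose_mat (RA_mat n s j (Br*A) i J) * (Gr*Vr)))^2 \<le> (?C * ?K)^2"
      by (metis abs_ge_zero abs_le_square_iff abs_of_nonneg order.trans)
  qed
  also have "(\<Sum>i\<in>{0..s}. \<Sum>J\<in>?M. (?C * ?K)^2) = real ((s+1) * card ?M) * (?C * ?K)^2"
    by (simp add: algebra_simps)
  also have "sqrt \<dots> = sqrt (real ((s+1) * card ?M)) * (?C * ?K)"
    using C0 K0 by (simp add: real_sqrt_mult)
  also have "\<dots> = Cf n s j Br dr A * RA_norm n s j A (wedge_cols n Vr)"
    unfolding Cf_def by (simp add: algebra_simps)
  finally show ?thesis .
qed

lemma denom_exists: "finite (X :: rat set) \<Longrightarrow> \<exists>d::int. d > 0 \<and> (\<forall>x\<in>X. of_int d * x \<in> \<int>)"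
proof (induction rule: finite_induct)
  case empty show ?case by (intro exI[of _ 1], auto)
next
  case (insert x X)
  then obtain d where d: "d > 0" "\<forall>y\<in>X. of_int d * y \<in> \<int>" by auto
  obtain p q where pq: "quotient_of x = (p,q)" by (cases "quotient_of x", auto)
  have q: "q > 0" using quotient_of_denom_pos[OF pq] .
  have x: "x = of_int p / of_int q" using quotient_of_div[OF pq] .
  show ?case
  proof (intro exI[of _ "d*q"] conjI ballI)
    show "d * q > 0" using d q by simp
    fix y assume "y \<in> insert x X"
    thus "of_int (d*q) * y \<in> \<int>"
    proof
      assume "y = x"
      have qx: "of_int q * x = (of_int p :: rat)" using x q by (simp add: field_simps)
      have "of_int (d*q) * y = of_int d * (of_int q * x)" using \<open>y = x\<close> by simp
      also have "\<dots> = of_int (d * p)" unfolding qx by simp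
      finally have "of_int (d*q) * y = (of_int (d * p) :: rat)" .
      thus ?thesis by (simp only: Ints_of_int)
    next
      assume "y \<in> X"
      hence "of_int d * y \<in> \<int>" using d by auto
      hence "of_int q * (of_int d * y) \<in> \<int>" by (rule Ints_mult[OF Ints_of_int])
      thus ?thesis by (simp add: algebra_simps)
    qed
  qed
qed

lemma sum_restrict_s:
  fixes g :: "nat \<Rightarrow> real"
  assumes "s < n" "\<And>b. s < b \<Longrightarrow> b < n+1 \<Longrightarrow> g b = 0"
  shows "(\<Sum>b<n+1. g b) = (\<Sum>b<s+1. g b)"
  by (rule sum.mono_neutral_right, insert assms, auto)

lemma Gr_inj:
  fixes Gr Br Bi :: "real mat"
  assumes sn: "s < n" and Gr: "Gr \<in> carrier_mat (n+1) (n+1)"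
    and Gr_idx: "\<And>a b. a < n+1 \<Longrightarrow> b < n+1 \<Longrightarrow> Gr $$ (a,b) = dr * G0e s Br a b"
    and dr: "dr \<noteq> 0" and Br: "Br \<in> carrier_mat (s+1) (s+1)" and Bi: "Bi \<in> carrier_mat (s+1) (s+1)"
    and BiBr: "Bi * Br = 1\<^sub>m (s+1)"
    and z: "z \<in> carrier_vec (n+1)" and Gz: "Gr *\<^sub>v z = 0\<^sub>v (n+1)"
  shows "z = 0\<^sub>v (n+1)"
proof -
  have e: "\<And>a. a < n+1 \<Longrightarrow> (\<Sum>b<n+1. dr * G0e s Br a b * z $ b) = 0"
  proof -
    fix a assume a: "a < n+1"
    have "0 = (Gr *\<^sub>v z) $ a" using Gz a by simp
    also have "\<dots> = (\<Sum>b<n+1. dr * G0e s Br a b * z $ b)"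
      using Gr z a Gr_idx by (auto simp: scalar_prod_def atLeast0LessThan intro!: sum.cong)
    finally show "(\<Sum>b<n+1. dr * G0e s Br a b * z $ b) = 0" by simp
  qed
  have hi: "\<And>a. s < a \<Longrightarrow> a < n+1 \<Longrightarrow> z $ a = 0"
  proof -
    fix a assume a: "s < a" "a < n+1"
    have "(\<Sum>b<n+1. dr * G0e s Br a b * z $ b) = (\<Sum>b<n+1. if b = a then dr * z $ a else 0)"
      by (rule sum.cong, insert a, auto simp: G0e_def)
    also have "\<dots> = dr * z $ a" using a by simp
    finally show "z $ a = 0" using e[OF a(2)] dr by simp
  qed
  define zs where "zs = vec (s+1) (\<lambda>b. z $ b)"
  have zs: "zs \<in> carrier_vec (s+1)" unfolding zs_def by simp
  have Bzs: "Br *\<^sub>v zs = 0\<^sub>v (s+1)"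
  proof (rule eq_vecI)
    fix a assume "a < dim_vec (0\<^sub>v (s+1) :: real vec)"
    hence a: "a < s+1" by simp
    have "(\<Sum>b<n+1. dr * G0e s Br a b * z $ b) = (\<Sum>b<s+1. dr * G0e s Br a b * z $ b)"
      by (rule sum_restrict_s[OF sn], insert a, auto simp: G0e_def)
    also have "\<dots> = dr * (\<Sum>b<s+1. Br $$ (a,b) * zs $ b)"
      unfolding zs_def using a by (auto simp: G0e_def sum_distrib_left intro!: sum.cong)
    finally have "dr * (\<Sum>b<s+1. Br $$ (a,b) * zs $ b) = 0" using e[of a] a sn by simp
    hence "(\<Sum>b<s+1. Br $$ (a,b) * zs $ b) = 0" using dr by simp
    thus "(Br *\<^sub>v zs) $ a = 0\<^sub>v (s+1) $ a" using Br zs a by (auto simp: scalar_prod_def atLeast0LessThan)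
  qed (insert Br, auto)
  have "zs = (Bi * Br) *\<^sub>v zs" using BiBr zs by simp
  also have "\<dots> = Bi *\<^sub>v (Br *\<^sub>v zs)" by (rule assoc_mult_mat_vec[OF Bi Br zs])
  also have "\<dots> = 0\<^sub>v (s+1)" unfolding Bzs by (rule eq_vecI, insert Bi, auto simp: scalar_prod_def)
  finally have zs0: "zs = 0\<^sub>v (s+1)" .
  show ?thesis
  proof (rule eq_vecI)
    fix a assume "a < dim_vec (0\<^sub>v (n+1) :: real vec)"
    hence a: "a < n+1" by simp
    show "z $ a = 0\<^sub>v (n+1) $ a"
    proof (cases "a \<le> s")
      case True
      have "zs $ a = z $ a" unfolding zs_def using True by simp
      thus ?thesis using zs0 True a by simp
    next
      case False thus ?thesis using hi a by simp
    qed
  qed (insert z, auto)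
qed

lemma proj_scale:
  fixes Gr Br Vr :: "real mat"
  assumes sn: "s < n" and Gr: "Gr \<in> carrier_mat (n+1) (n+1)"
    and Gr_idx: "\<And>a b. a < n+1 \<Longrightarrow> b < n+1 \<Longrightarrow> Gr $$ (a,b) = dr * G0e s Br a b"
    and Vr: "Vr \<in> carrier_mat (n+1) j"
  shows "proj_bullet n s (wedge_cols n (Gr*Vr)) I = dr^j * proj_bullet n s (wedge_cols n Vr) I"
proof (cases "I \<subseteq> {s+1..n} \<and> I \<in> multi_idx {0..n} j")
  case True
  hence I: "I \<subseteq> {0..<n+1}" "card I = j" "I \<subseteq> {s+1..n}" unfolding multi_idx_def by auto
  have GV: "Gr * Vr \<in> carrier_mat (n+1) j" using Gr Vr by auto
  have fI: "finite I" using I(1) finite_subset by auto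
  have pI: "\<And>q. q < j \<Longrightarrow> pick I q \<in> I" using pick_in_set_le I by auto
  have "submatrix (Gr*Vr) I UNIV = mat j j (\<lambda>(q,c). (Gr*Vr) $$ (pick I q, c))"
    by (rule submatrix_rows_eq[OF GV I(1,2)])
  also have "\<dots> = dr \<cdot>\<^sub>m mat j j (\<lambda>(q,c). Vr $$ (pick I q, c))"
  proof (rule eq_matI)
    fix q c assume "q < dim_row (dr \<cdot>\<^sub>m mat j j (\<lambda>(q,c). Vr $$ (pick I q, c)))"
      "c < dim_col (dr \<cdot>\<^sub>m mat j j (\<lambda>(q,c). Vr $$ (pick I q, c)))"
    hence qc: "q < j" "c < j" by auto
    let ?p = "pick I q"
    have p: "s < ?p" "?p < n+1" using pI[OF qc(1)] I by auto
    have "(Gr*Vr) $$ (?p, c) = (\<Sum>l<n+1. dr * G0e s Br ?p l * Vr $$ (l,c))"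
      using Gr Vr p qc Gr_idx by (auto simp: scalar_prod_def atLeast0LessThan intro!: sum.cong)
    also have "\<dots> = (\<Sum>l<n+1. if l = ?p then dr * Vr $$ (?p,c) else 0)"
      by (rule sum.cong, insert p, auto simp: G0e_def)
    also have "\<dots> = dr * Vr $$ (?p,c)" using p by simp
    finally show "mat j j (\<lambda>(q,c). (Gr*Vr) $$ (pick I q, c)) $$ (q,c) = (dr \<cdot>\<^sub>m mat j j (\<lambda>(q,c). Vr $$ (pick I q, c))) $$ (q,c)"
      using qc by simp
  qed auto
  finally have "det (submatrix (Gr*Vr) I UNIV) = dr^j * det (submatrix Vr I UNIV)"
    unfolding submatrix_rows_eq[OF Vr I(1,2)] by (simp add: det_smult)
  thus ?thesis unfolding proj_bullet_def wedge_cols_def using True GV Vr by auto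
next
  case False
  thus ?thesis unfolding proj_bullet_def wedge_cols_def using Gr Vr by auto
qed

lemma norm_scale:
  assumes "\<And>I. x I = c * y I" "0 \<le> c"
  shows "ext_norm n j x = c * ext_norm n j y"
proof -
  have "ext_inner n j x x = c^2 * ext_inner n j y y"
    unfolding ext_inner_def assms(1) by (simp add: sum_distrib_left power2_eq_square algebra_simps)
  thus ?thesis unfolding ext_norm_def using assms(2) by (simp add: real_sqrt_mult)
qed

lemma inv_real:
  fixes B :: "rat mat"
  assumes B: "B \<in> carrier_mat (s+1) (s+1)" and invB: "invertible_mat B"
  shows "\<exists>Bi. Bi \<in> carrier_mat (s+1) (s+1) \<and> B * Bi = 1\<^sub>m (s+1) \<and> Bi * B = 1\<^sub>m (s+1)"
proof -
  from invB obtain Bi where i1: "B * Bi = 1\<^sub>m (dim_row B)" and i2: "Bi * B = 1\<^sub>m (dim_row Bi)"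
    unfolding invertible_mat_def inverts_mat_def by auto
  have "dim_col Bi = s+1" using i1 B by (metis dim_col_mat(1) index_mult_mat(3) index_one_mat(3) carrier_matD(1))
  moreover have "dim_row Bi = s+1" using i2 B by (metis index_mult_mat(3) index_one_mat(3) carrier_matD(2))
  ultimately show ?thesis using i1 i2 B by (intro exI[of _ Bi], auto)
qed

lemma transfer:
  fixes A :: "real mat" and B :: "rat mat"
  assumes sn: "s < n" and A: "A \<in> carrier_mat (s+1) (n-s)" and B: "B \<in> carrier_mat (s+1) (s+1)"
    and invB: "invertible_mat B" and j: "1 \<le> j"
  shows "\<exists>\<kappa> C. 1 \<le> \<kappa> \<and> 0 < C \<and> (\<forall>w\<in>S_set n j. \<exists>w'\<in>S_set n j.
    ext_norm n j (proj_bullet n s w') = \<kappa> * ext_norm n j (proj_bullet n s w) \<and>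
    RA_norm n s j (map_mat of_rat B * A) w' \<le> C * RA_norm n s j A w)"
proof -
  let ?Br = "map_mat of_rat B :: real mat"
  have Br: "?Br \<in> carrier_mat (s+1) (s+1)" using B by simp
  obtain Bi where Bi: "Bi \<in> carrier_mat (s+1) (s+1)" and BiB: "Bi * B = 1\<^sub>m (s+1)"
    using inv_real[OF B invB] by auto
  let ?Bir = "map_mat of_rat Bi :: real mat"
  have Bir: "?Bir \<in> carrier_mat (s+1) (s+1)" using Bi by simp
  have "?Bir * ?Br = map_mat of_rat (Bi * B)" by (rule of_rat_hom.mat_hom_mult[OF Bi B, symmetric])
  also have "\<dots> = 1\<^sub>m (s+1)" unfolding BiB by (rule of_rat_hom.mat_hom_one)
  finally have BirBr: "?Bir * ?Br = 1\<^sub>m (s+1)" .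
  let ?X = "(\<lambda>(a,b). B $$ (a,b)) ` ({..<s+1} \<times> {..<s+1})"
  obtain d :: int where d: "d > 0" and dX: "\<forall>x\<in>?X. of_int d * x \<in> \<int>"
    using denom_exists[of ?X] by auto
  have dB: "\<And>a b. a < s+1 \<Longrightarrow> b < s+1 \<Longrightarrow> of_int d * B $$ (a,b) \<in> \<int>" using dX by auto
  define Gi :: "int mat" where "Gi = mat (n+1) (n+1) (\<lambda>(a,b). if a \<le> s \<and> b \<le> s then \<lfloor>of_int d * B $$ (a,b)\<rfloor> else if a = b then d else 0)"
  define Gr where "Gr = map_mat real_of_int Gi"
  have Gi: "Gi \<in> carrier_mat (n+1) (n+1)" unfolding Gi_def by simp
  have Gr: "Gr \<in> carrier_mat (n+1) (n+1)" unfolding Gr_def using Gi by simp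
  let ?dr = "real_of_int d"
  have Gr_idx: "\<And>a b. a < n+1 \<Longrightarrow> b < n+1 \<Longrightarrow> Gr $$ (a,b) = ?dr * G0e s ?Br a b"
  proof -
    fix a b assume ab: "a < n+1" "b < n+1"
    show "Gr $$ (a,b) = ?dr * G0e s ?Br a b"
    proof (cases "a \<le> s \<and> b \<le> s")
      case True
      have "Gr $$ (a,b) = real_of_int \<lfloor>of_int d * B $$ (a,b)\<rfloor>" unfolding Gr_def Gi_def using ab True by simp
      also have "\<dots> = of_rat (of_int \<lfloor>of_int d * B $$ (a,b)\<rfloor>)" by (rule of_rat_of_int_eq[symmetric])
      also have "of_int \<lfloor>of_int d * B $$ (a,b)\<rfloor> = of_int d * B $$ (a,b)"
        by (rule of_int_floor, rule dB, insert True, auto)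
      also have "of_rat (of_int d * B $$ (a,b)) = ?dr * of_rat (B $$ (a,b))" by (simp add: of_rat_mult)
      finally show ?thesis unfolding G0e_def using True B by simp
    next
      case False
      thus ?thesis unfolding Gr_def Gi_def G0e_def using ab by auto
    qed
  qed
  define C where "C = Cf n s j ?Br ?dr A + 1"
  have Ct0: "0 \<le> Ctot n s j ?Br ?dr" unfolding Ctot_def by (intro sum_nonneg CT_nonneg)
  have Cf0: "0 \<le> Cf n s j ?Br ?dr A" unfolding Cf_def using Ct0 by simp
  have k1: "1 \<le> ?dr^j" using d by simp
  have C0: "0 < C" unfolding C_def using Cf0 by simp
  have main: "\<forall>w\<in>S_set n j. \<exists>w'\<in>S_set n j. ext_norm n j (proj_bullet n s w') = ?dr^j * ext_norm n j (proj_bullet n s w) \<and>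
      RA_norm n s j (map_mat of_rat B * A) w' \<le> C * RA_norm n s j A w"
  proof
    fix w assume "w \<in> S_set n j"
    then obtain V where w: "w = wedge_cols n (map_mat real_of_int V)" and V: "V \<in> carrier_mat (n+1) j"
      and li: "cols_lin_indep (map_mat real_of_int V)" unfolding S_set_def by auto
    let ?Vr = "map_mat real_of_int V"
    have Vr: "?Vr \<in> carrier_mat (n+1) j" using V by simp
    have GV: "map_mat real_of_int (Gi * V) = Gr * ?Vr"
      unfolding Gr_def by (rule of_int_hom.mat_hom_mult[OF Gi V])
    have GiV: "Gi * V \<in> carrier_mat (n+1) j" using Gi V by simp
    have li': "cols_lin_indep (Gr * ?Vr)" unfolding cols_lin_indep_def
    proof (intro ballI impI)
      fix c assume c: "c \<in> carrier_vec (dim_col (Gr * ?Vr))" and e: "Gr * ?Vr *\<^sub>v c = 0\<^sub>v (dim_row (Gr * ?Vr))"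
      have c': "c \<in> carrier_vec j" using c Vr by simp
      have "Gr *\<^sub>v (?Vr *\<^sub>v c) = 0\<^sub>v (n+1)" using e assoc_mult_mat_vec[OF Gr Vr c'] Gr by simp
      moreover have "?dr \<noteq> 0" using d by simp
      moreover have "?Vr *\<^sub>v c \<in> carrier_vec (n+1)" using Vr by (intro mult_mat_vec_carrier[OF Vr c'])
      ultimately have "?Vr *\<^sub>v c = 0\<^sub>v (n+1)"
        using Gr_inj[OF sn Gr Gr_idx _ Br Bir BirBr] by blast
      hence "c = 0\<^sub>v (dim_col ?Vr)" using li c' Vr unfolding cols_lin_indep_def by auto
      thus "c = 0\<^sub>v (dim_col (Gr * ?Vr))" by simp
    qed
    define w' where "w' = wedge_cols n (map_mat real_of_int (Gi * V))"
    have w'S: "w' \<in> S_set n j" unfolding S_set_def w'_def using GiV li' GV by (intro CollectI exI[of _ "Gi*V"]) simp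
    show "\<exists>w'\<in>S_set n j. ext_norm n j (proj_bullet n s w') = ?dr^j * ext_norm n j (proj_bullet n s w) \<and>
      RA_norm n s j (map_mat of_rat B * A) w' \<le> C * RA_norm n s j A w"
    proof (intro bexI[OF _ w'S] conjI)
      show "ext_norm n j (proj_bullet n s w') = ?dr^j * ext_norm n j (proj_bullet n s w)"
      proof -
        have pe: "\<And>I. proj_bullet n s (wedge_cols n (Gr * ?Vr)) I = ?dr^j * proj_bullet n s (wedge_cols n ?Vr) I"
          by (rule proj_scale[OF sn Gr Gr_idx Vr])
        have dj: "0 \<le> ?dr^j" using k1 by linarith
        show ?thesis unfolding w'_def GV w by (rule norm_scale[OF pe dj])
      qed
      have "RA_norm n s j (?Br * A) (wedge_cols n (Gr * ?Vr)) \<le> Cf n s j ?Br ?dr A * RA_norm n s j A (wedge_cols n ?Vr)"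
        by (rule RA'_bound[OF sn A Br Vr Gr Gr_idx j])
      also have "\<dots> \<le> C * RA_norm n s j A (wedge_cols n ?Vr)"
        unfolding C_def by (rule mult_right_mono, simp, rule RA_nonneg)
      finally show "RA_norm n s j (map_mat of_rat B * A) w' \<le> C * RA_norm n s j A w"
        unfolding w'_def GV w .
    qed
  qed
  show ?thesis by (rule exI[of _ "?dr^j"], rule exI[of _ C], intro conjI k1 C0 main)
qed

lemma key_step:
  fixes A A' :: "real mat"
  assumes k: "1 \<le> \<kappa>" and C: "0 < C"
    and tr: "\<forall>w\<in>S_set n j. \<exists>w'\<in>S_set n j.
      ext_norm n j (proj_bullet n s w') = \<kappa> * ext_norm n j (proj_bullet n s w) \<and>
      RA_norm n s j A' w' \<le> C * RA_norm n s j A w"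
    and j: "1 \<le> j" and rv: "r < v"
    and P: "\<forall>M::real. \<exists>w\<in>S_set n j. ext_norm n j (proj_bullet n s w) > M \<and>
       RA_norm n s j A w < ext_norm n j (proj_bullet n s w) powr (- (v + 1 - real j) / real j)"
  shows "\<forall>M::real. \<exists>w\<in>S_set n j. ext_norm n j (proj_bullet n s w) > M \<and>
       RA_norm n s j A' w < ext_norm n j (proj_bullet n s w) powr (- (r + 1 - real j) / real j)"
proof
  fix M :: real
  define e where "e = - (v + 1 - real j) / real j"
  define e' where "e' = - (r + 1 - real j) / real j"
  define \<delta> where "\<delta> = e' - e"
  have jp: "0 < real j" using j by simp
  have \<delta>: "0 < \<delta>" unfolding \<delta>_def e_def e'_def using rv jp by (simp add: field_simps)
  have ee: "e' = e + \<delta>" unfolding \<delta>_def by simp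
  define Kc where "Kc = C * \<kappa> powr (- e')"
  have Kc0: "0 < Kc" unfolding Kc_def using C k by simp
  define H0 where "H0 = max (max M 1) (Kc powr (1/\<delta>))"
  obtain w where w: "w \<in> S_set n j" and H: "ext_norm n j (proj_bullet n s w) > H0"
    and RA: "RA_norm n s j A w < ext_norm n j (proj_bullet n s w) powr e"
    using P unfolding e_def by blast
  define H where "H = ext_norm n j (proj_bullet n s w)"
  obtain w' where w': "w' \<in> S_set n j" and H': "ext_norm n j (proj_bullet n s w') = \<kappa> * H"
    and RA': "RA_norm n s j A' w' \<le> C * RA_norm n s j A w"
    using tr w unfolding H_def by blast
  have H1: "1 < H" using H unfolding H_def H0_def by simp
  have Hpos: "0 < H" using H1 by simp
  have "M < \<kappa> * H"
  proof -
    have "M < H" using H unfolding H_def H0_def by simp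
    also have "H \<le> \<kappa> * H" using k Hpos by simp
    finally show ?thesis .
  qed
  moreover have "RA_norm n s j A' w' < (\<kappa> * H) powr e'"
  proof -
    have A1: "Kc \<le> H powr \<delta>"
    proof -
      have "Kc = (Kc powr (1/\<delta>)) powr \<delta>" using Kc0 \<delta> by (simp add: powr_powr)
      also have "\<dots> \<le> H powr \<delta>"
        by (rule powr_mono2, insert \<delta> H, auto simp: H_def H0_def)
      finally show ?thesis .
    qed
    have kk: "\<kappa> powr e' * \<kappa> powr (- e') = 1" using k by (simp add: powr_add[symmetric])
    have "RA_norm n s j A' w' \<le> C * RA_norm n s j A w" by (rule RA')
    also have "\<dots> < C * H powr e" using RA C unfolding H_def by simp
    also have "C * H powr e = (\<kappa> powr e' * H powr e) * Kc"
      unfolding Kc_def using kk by (simp add: algebra_simps)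
    also have "\<dots> \<le> (\<kappa> powr e' * H powr e) * H powr \<delta>"
      by (rule mult_left_mono[OF A1], simp)
    also have "\<dots> = \<kappa> powr e' * H powr e'" unfolding ee by (simp add: powr_add)
    also have "\<dots> = (\<kappa> * H) powr e'" using k Hpos by (simp add: powr_mult)
    finally show ?thesis .
  qed
  ultimately have m12: "M < ext_norm n j (proj_bullet n s w') \<and>
       RA_norm n s j A' w' < ext_norm n j (proj_bullet n s w') powr (- (r + 1 - real j) / real j)"
    unfolding H' e'_def by simp
  show "\<exists>w\<in>S_set n j. ext_norm n j (proj_bullet n s w) > M \<and>
       RA_norm n s j A' w < ext_norm n j (proj_bullet n s w) powr (- (r + 1 - real j) / real j)"
    by (rule bexI[OF _ w'], insert m12, simp)
qed

lemma omega_le: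
  fixes A :: "real mat" and B :: "rat mat"
  assumes sn: "s < n" and A: "A \<in> carrier_mat (s+1) (n-s)" and B: "B \<in> carrier_mat (s+1) (s+1)"
    and invB: "invertible_mat B" and j: "1 \<le> j"
  shows "omega n s j A \<le> omega n s j (map_mat of_rat B * A)"
proof -
  obtain \<kappa> C where k: "1 \<le> \<kappa>" and C: "0 < C" and tr: "\<forall>w\<in>S_set n j. \<exists>w'\<in>S_set n j.
      ext_norm n j (proj_bullet n s w') = \<kappa> * ext_norm n j (proj_bullet n s w) \<and>
      RA_norm n s j (map_mat of_rat B * A) w' \<le> C * RA_norm n s j A w"
    using transfer[OF sn A B invB j] by blast
  let ?A' = "map_mat of_rat B * A"
  show ?thesis unfolding omega_def
  proof (rule Sup_least)
    fix x assume "x \<in> {ereal v |v. \<forall>M. \<exists>w\<in>S_set n j. M < ext_norm n j (proj_bullet n s w) \<and>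
      RA_norm n s j A w < ext_norm n j (proj_bullet n s w) powr (- (v + 1 - real j) / real j)}"
    then obtain v where x: "x = ereal v" and P: "\<forall>M. \<exists>w\<in>S_set n j. M < ext_norm n j (proj_bullet n s w) \<and>
      RA_norm n s j A w < ext_norm n j (proj_bullet n s w) powr (- (v + 1 - real j) / real j)" by auto
    show "x \<le> Sup {ereal v |v. \<forall>M. \<exists>w\<in>S_set n j. M < ext_norm n j (proj_bullet n s w) \<and>
      RA_norm n s j ?A' w < ext_norm n j (proj_bullet n s w) powr (- (v + 1 - real j) / real j)}"
      unfolding x
    proof (rule dense_le)
      fix y assume "y < ereal v"
      then obtain r where yr: "y < ereal r" and rv: "ereal r < ereal v" using ereal_dense2 by blast
      have "\<forall>M. \<exists>w\<in>S_set n j. M < ext_norm n j (proj_bullet n s w) \<and>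
        RA_norm n s j ?A' w < ext_norm n j (proj_bullet n s w) powr (- (r + 1 - real j) / real j)"
        using key_step[OF k C tr j _ P] rv by simp
      hence "ereal r \<le> Sup {ereal v |v. \<forall>M. \<exists>w\<in>S_set n j. M < ext_norm n j (proj_bullet n s w) \<and>
        RA_norm n s j ?A' w < ext_norm n j (proj_bullet n s w) powr (- (v + 1 - real j) / real j)}"
        by (intro Sup_upper, auto)
      thus "y \<le> Sup {ereal v |v. \<forall>M. \<exists>w\<in>S_set n j. M < ext_norm n j (proj_bullet n s w) \<and>
        RA_norm n s j ?A' w < ext_norm n j (proj_bullet n s w) powr (- (v + 1 - real j) / real j)}"
        using yr by simp
    qed
  qed
qed

theorem lemma5p6:
  fixes n s :: nat and A :: "real mat" and B :: "rat mat"
  assumes "s < n"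
    and "A \<in> carrier_mat (s+1) (n-s)"
    and "B \<in> carrier_mat (s+1) (s+1)"
    and "invertible_mat B"
  shows "\<forall>j\<in>{1..n-s}. omega n s j (map_mat of_rat B * A) = omega n s j A"
proof
  fix j assume "j \<in> {1..n-s}"
  hence j: "1 \<le> j" by simp
  note sn = assms(1) and A = assms(2) and B = assms(3) and invB = assms(4)
  obtain Bi where Bi: "Bi \<in> carrier_mat (s+1) (s+1)" and BBi: "B * Bi = 1\<^sub>m (s+1)" and BiB: "Bi * B = 1\<^sub>m (s+1)"
    using inv_real[OF B invB] by auto
  have invBi: "invertible_mat Bi" unfolding invertible_mat_def inverts_mat_def
    using Bi B BBi BiB by (intro conjI exI[of _ B], auto)
  let ?Br = "map_mat of_rat B :: real mat"
  let ?Bir = "map_mat of_rat Bi :: real mat"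
  have BA: "?Br * A \<in> carrier_mat (s+1) (n-s)" using B A by simp
  have e1: "?Bir * ?Br = map_mat of_rat (Bi * B)" by (rule of_rat_hom.mat_hom_mult[OF Bi B, symmetric])
  have e2: "map_mat of_rat (Bi * B) = (1\<^sub>m (s+1) :: real mat)" unfolding BiB by (rule of_rat_hom.mat_hom_one)
  have "?Bir * (?Br * A) = (?Bir * ?Br) * A" using Bi B A by (simp add: assoc_mult_mat)
  also have "\<dots> = 1\<^sub>m (s+1) * A" unfolding e1 e2 ..
  also have "\<dots> = A" using A by simp
  finally have backA: "?Bir * (?Br * A) = A" .
  have "omega n s j A \<le> omega n s j (?Br * A)" by (rule omega_le[OF sn A B invB j])
  moreover have "omega n s j (?Br * A) \<le> omega n s j (?Bir * (?Br * A))"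
    by (rule omega_le[OF sn BA Bi invBi j])
  ultimately show "omega n s j (?Br * A) = omega n s j A" unfolding backA by simp
qed


end
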